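(* Let $A$ be a finite-dimensional algebra over a field $K$ with the property that if $A$ satisfies the Auslander condition then $A$ is Iwanaga–Gorenstein. If $A$ has infinite dominant dimension, then $A$ is selfinjective.
   Context: Modules are finitely generated right modules. Let $0\to A\to I^0\to I^1\to\cdots$ be a minimal injective coresolution of $A_A$. For $n\ge 1$, $A$ is $n$-Gorenstein if $\operatorname{pd} I^i\le i$ for all $0\le i<n$; $A$ satisfies the Auslander condition if it is $n$-Gorenstein for all $n\ge 1$. $A$ is Iwanaga–Gorenstein if $\operatorname{id} A_A=\operatorname{id}{}_AA<\infty$. The dominant dimension of $A$ is the smallest $n$ such that $I^n$ is not projective (and $\infty$ if all $I^n$ are projective). *)

theory Defs
  imports "Jordan_Normal_Form.Matrix" "HOL-Library.Extended_Nat"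
begin

text \<open>A finite-dimensional K-algebra is represented (up to isomorphism, via the regular
representation) as a unital K-subalgebra of the D x D matrices: the pair (D, A).\<close>
type_synonym 'k alg = "nat \<times> 'k mat set"

definition fd_algebra :: "('k::field) alg \<Rightarrow> bool" where
  "fd_algebra Alg \<longleftrightarrow> (let D = fst Alg; A = snd Alg in
     A \<subseteq> carrier_mat D D \<and> 1\<^sub>m D \<in> A \<and> 0\<^sub>m D D \<in> A \<and>
     (\<forall>a\<in>A. \<forall>b\<in>A. a + b \<in> A \<and> a * b \<in> A) \<and>
     (\<forall>c a. a \<in> A \<longrightarrow> c \<cdot>\<^sub>m a \<in> A))"

text \<open>A finitely generated (= finite-dimensional) module is K^m (column vectors) with
an action a \<mapsto> \<rho> a.  Flag l = True: left module (a.v = \<rho> a v, \<rho> multiplicative);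
l = False: right module (v.a = \<rho> a v, \<rho> anti-multiplicative).\<close>
type_synonym 'k amod = "nat \<times> ('k mat \<Rightarrow> 'k mat)"

definition is_mod :: "('k::field) alg \<Rightarrow> bool \<Rightarrow> 'k amod \<Rightarrow> bool" where
  "is_mod Alg l M \<longleftrightarrow> (let D = fst Alg; A = snd Alg; m = fst M; \<rho> = snd M in
     (\<forall>a\<in>A. \<rho> a \<in> carrier_mat m m) \<and> \<rho> (1\<^sub>m D) = 1\<^sub>m m \<and>
     (\<forall>a\<in>A. \<forall>b\<in>A. \<rho> (a + b) = \<rho> a + \<rho> b) \<and>
     (\<forall>c. \<forall>a\<in>A. \<rho> (c \<cdot>\<^sub>m a) = c \<cdot>\<^sub>m \<rho> a) \<and>
     (\<forall>a\<in>A. \<forall>b\<in>A. \<rho> (a * b) = (if l then \<rho> a * \<rho> b else \<rho> b * \<rho> a)))"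

definition is_hom :: "('k::field) alg \<Rightarrow> 'k amod \<Rightarrow> 'k amod \<Rightarrow> 'k mat \<Rightarrow> bool" where
  "is_hom Alg M N F \<longleftrightarrow> F \<in> carrier_mat (fst N) (fst M) \<and>
     (\<forall>a\<in>snd Alg. F * snd M a = snd N a * F)"

definition ker :: "('k::field) mat \<Rightarrow> nat \<Rightarrow> 'k vec set" where
  "ker F n = {v \<in> carrier_vec n. F *\<^sub>v v = 0\<^sub>v (dim_row F)}"

definition img :: "('k::field) mat \<Rightarrow> nat \<Rightarrow> 'k vec set" where
  "img F n = (\<lambda>v. F *\<^sub>v v) ` carrier_vec n"

definition injective_mod :: "('k::field) alg \<Rightarrow> bool \<Rightarrow> 'k amod \<Rightarrow> bool" where
  "injective_mod Alg l I \<longleftrightarrow> is_mod Alg l I \<and>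
     (\<forall>M N f g. is_mod Alg l M \<and> is_mod Alg l N \<and> is_hom Alg M N f \<and>
        inj_on (\<lambda>v. f *\<^sub>v v) (carrier_vec (fst M)) \<and> is_hom Alg M I g
        \<longrightarrow> (\<exists>h. is_hom Alg N I h \<and> h * f = g))"

definition projective_mod :: "('k::field) alg \<Rightarrow> bool \<Rightarrow> 'k amod \<Rightarrow> bool" where
  "projective_mod Alg l P \<longleftrightarrow> is_mod Alg l P \<and>
     (\<forall>M N g f. is_mod Alg l M \<and> is_mod Alg l N \<and> is_hom Alg M N g \<and>
        img g (fst M) = carrier_vec (fst N) \<and> is_hom Alg P N f
        \<longrightarrow> (\<exists>h. is_hom Alg P M h \<and> g * h = f))"

text \<open>M is (isomorphic to) the regular module A_A (l = False) resp. _AA (l = True):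
  there is v with a \<mapsto> a-action on v a bijection A \<rightarrow> M.\<close>
definition regular_mod :: "('k::field) alg \<Rightarrow> bool \<Rightarrow> 'k amod \<Rightarrow> bool" where
  "regular_mod Alg l M \<longleftrightarrow> is_mod Alg l M \<and>
     (\<exists>v\<in>carrier_vec (fst M). bij_betw (\<lambda>a. snd M a *\<^sub>v v) (snd Alg) (carrier_vec (fst M)))"

definition submod :: "('k::field) alg \<Rightarrow> 'k amod \<Rightarrow> 'k vec set \<Rightarrow> bool" where
  "submod Alg M U \<longleftrightarrow> U \<subseteq> carrier_vec (fst M) \<and> 0\<^sub>v (fst M) \<in> U \<and>
     (\<forall>u\<in>U. \<forall>w\<in>U. u + w \<in> U) \<and> (\<forall>c. \<forall>u\<in>U. c \<cdot>\<^sub>v u \<in> U) \<and>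
     (\<forall>a\<in>snd Alg. \<forall>u\<in>U. snd M a *\<^sub>v u \<in> U)"

definition essential :: "('k::field) alg \<Rightarrow> 'k amod \<Rightarrow> 'k vec set \<Rightarrow> bool" where
  "essential Alg M U \<longleftrightarrow> submod Alg M U \<and>
     (\<forall>V. submod Alg M V \<and> V \<noteq> {0\<^sub>v (fst M)} \<longrightarrow> U \<inter> V \<noteq> {0\<^sub>v (fst M)})"

text \<open>Injective coresolution 0 \<rightarrow> M \<rightarrow>(\<epsilon>) I 0 \<rightarrow>(d 0) I 1 \<rightarrow>(d 1) ...\<close>
definition inj_coresolution ::
  "('k::field) alg \<Rightarrow> bool \<Rightarrow> 'k amod \<Rightarrow> (nat \<Rightarrow> 'k amod) \<Rightarrow> (nat \<Rightarrow> 'k mat) \<Rightarrow> 'k mat \<Rightarrow> bool" where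
  "inj_coresolution Alg l M I d \<epsilon> \<longleftrightarrow> is_mod Alg l M \<and>
     (\<forall>i. injective_mod Alg l (I i)) \<and>
     is_hom Alg M (I 0) \<epsilon> \<and> (\<forall>i. is_hom Alg (I i) (I (Suc i)) (d i)) \<and>
     ker \<epsilon> (fst M) = {0\<^sub>v (fst M)} \<and>
     img \<epsilon> (fst M) = ker (d 0) (fst (I 0)) \<and>
     (\<forall>i. img (d i) (fst (I i)) = ker (d (Suc i)) (fst (I (Suc i))))"

text \<open>Minimal: each I i is an injective envelope of the i-th cosyzygy, i.e.
  ker (d i) = image of the previous map is essential in I i.\<close>
definition min_inj_coresolution ::
  "('k::field) alg \<Rightarrow> bool \<Rightarrow> 'k amod \<Rightarrow> (nat \<Rightarrow> 'k amod) \<Rightarrow> (nat \<Rightarrow> 'k mat) \<Rightarrow> 'k mat \<Rightarrow> bool" where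
  "min_inj_coresolution Alg l M I d \<epsilon> \<longleftrightarrow> inj_coresolution Alg l M I d \<epsilon> \<and>
     (\<forall>i. essential Alg (I i) (ker (d i) (fst (I i))))"

text \<open>Projective resolution ... \<rightarrow> P 1 \<rightarrow>(dd 0) P 0 \<rightarrow>(pp) M \<rightarrow> 0.\<close>
definition proj_resolution ::
  "('k::field) alg \<Rightarrow> bool \<Rightarrow> 'k amod \<Rightarrow> (nat \<Rightarrow> 'k amod) \<Rightarrow> (nat \<Rightarrow> 'k mat) \<Rightarrow> 'k mat \<Rightarrow> bool" where
  "proj_resolution Alg l M P dd pp \<longleftrightarrow> is_mod Alg l M \<and>
     (\<forall>i. projective_mod Alg l (P i)) \<and>
     is_hom Alg (P 0) M pp \<and> (\<forall>i. is_hom Alg (P (Suc i)) (P i) (dd i)) \<and>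
     img pp (fst (P 0)) = carrier_vec (fst M) \<and>
     img (dd 0) (fst (P 1)) = ker pp (fst (P 0)) \<and>
     (\<forall>i. img (dd (Suc i)) (fst (P (Suc (Suc i)))) = ker (dd i) (fst (P (Suc i))))"

definition proj_dim :: "('k::field) alg \<Rightarrow> bool \<Rightarrow> 'k amod \<Rightarrow> enat" where
  "proj_dim Alg l M = Inf (enat ` {n. \<exists>P dd pp. proj_resolution Alg l M P dd pp \<and>
                                          (\<forall>i>n. fst (P i) = 0)})"

definition inj_dim :: "('k::field) alg \<Rightarrow> bool \<Rightarrow> 'k amod \<Rightarrow> enat" where
  "inj_dim Alg l M = Inf (enat ` {n. \<exists>I d \<epsilon>. inj_coresolution Alg l M I d \<epsilon> \<and>
                                          (\<forall>i>n. fst (I i) = 0)})"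

text \<open>Notions relative to the (fixed) minimal injective coresolution I of A_A.\<close>
definition n_gorenstein :: "('k::field) alg \<Rightarrow> (nat \<Rightarrow> 'k amod) \<Rightarrow> nat \<Rightarrow> bool" where
  "n_gorenstein Alg I n \<longleftrightarrow> (\<forall>i<n. proj_dim Alg False (I i) \<le> enat i)"

definition auslander_condition :: "('k::field) alg \<Rightarrow> (nat \<Rightarrow> 'k amod) \<Rightarrow> bool" where
  "auslander_condition Alg I \<longleftrightarrow> (\<forall>n\<ge>1. n_gorenstein Alg I n)"

definition dominant_dim :: "('k::field) alg \<Rightarrow> (nat \<Rightarrow> 'k amod) \<Rightarrow> enat" where
  "dominant_dim Alg I = Inf (enat ` {n. \<not> projective_mod Alg False (I n)})"

definition iwanaga_gorenstein :: "('k::field) alg \<Rightarrow> bool" where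
  "iwanaga_gorenstein Alg \<longleftrightarrow> (\<exists>R L. regular_mod Alg False R \<and> regular_mod Alg True L \<and>
     inj_dim Alg False R = inj_dim Alg True L \<and> inj_dim Alg False R < \<infinity>)"

definition selfinjective :: "('k::field) alg \<Rightarrow> bool" where
  "selfinjective Alg \<longleftrightarrow> (\<exists>R. regular_mod Alg False R \<and> injective_mod Alg False R)"

end

theory Submission
  imports Defs "Jordan_Normal_Form.Determinant"
begin


lemma smult_vec_zero_left[simp]: "(0::'a::field) \<cdot>\<^sub>v w = 0\<^sub>v (dim_vec w)"
  by (auto intro!: eq_vecI)

definition appcol :: "'k::field mat \<Rightarrow> 'k vec \<Rightarrow> 'k mat" where
  "appcol (B::'k mat) (w::'k vec) = mat (dim_row B) (Suc (dim_col B)) (\<lambda>(i,j). if j < dim_col B then B$$(i,j) else w$i)"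

lemma appcol_carrier: "B \<in> carrier_mat n c \<Longrightarrow> appcol B w \<in> carrier_mat n (Suc c)"
  unfolding appcol_def by auto

lemma appcol_mult:
  assumes B: "B \<in> carrier_mat n c" and w: "w \<in> carrier_vec n" and x: "x \<in> carrier_vec (Suc c)"
  shows "appcol B w *\<^sub>v x = B *\<^sub>v vec c (\<lambda>j. x$j) + x$c \<cdot>\<^sub>v w"
proof (rule eq_vecI)
  fix i assume "i < dim_vec (B *\<^sub>v vec c (\<lambda>j. x$j) + x$c \<cdot>\<^sub>v w)"
  then have i: "i < n" using B w by auto
  have "(appcol B w *\<^sub>v x) $ i = (\<Sum>j\<in>{0..<Suc c}. appcol B w $$ (i,j) * x$j)"
    using B x i appcol_carrier[OF B, of w] by (simp add: scalar_prod_def row_def)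
  also have "\<dots> = (\<Sum>j\<in>{0..<c}. B $$ (i,j) * x$j) + w$i * x$c"
    using B i unfolding appcol_def by (simp add: sum.atLeast0_lessThan_Suc)
  also have "\<dots> = (B *\<^sub>v vec c (\<lambda>j. x$j) + x$c \<cdot>\<^sub>v w) $ i"
    using B w i by (simp add: scalar_prod_def row_def)
  finally show "(appcol B w *\<^sub>v x) $ i = (B *\<^sub>v vec c (\<lambda>j. x$j) + x$c \<cdot>\<^sub>v w) $ i" .
qed (insert B w, auto simp: appcol_def)

lemma img_appcol:
  assumes B: "B \<in> carrier_mat n c" and w: "w \<in> carrier_vec n"
  shows "img (appcol B w) (Suc c) = {B *\<^sub>v y + t \<cdot>\<^sub>v w | y t. y \<in> carrier_vec c}"
proof
  show "img (appcol B w) (Suc c) \<subseteq> {B *\<^sub>v y + t \<cdot>\<^sub>v w | y t. y \<in> carrier_vec c}"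
    unfolding img_def using appcol_mult[OF B w] by fastforce
next
  show "{B *\<^sub>v y + t \<cdot>\<^sub>v w | y t. y \<in> carrier_vec c} \<subseteq> img (appcol B w) (Suc c)"
  proof
    fix z assume "z \<in> {B *\<^sub>v y + t \<cdot>\<^sub>v w | y t. y \<in> carrier_vec c}"
    then obtain y t where y: "y \<in> carrier_vec c" and z: "z = B *\<^sub>v y + t \<cdot>\<^sub>v w" by auto
    define x where "x = vec (Suc c) (\<lambda>j. if j < c then y$j else t)"
    have x: "x \<in> carrier_vec (Suc c)" unfolding x_def by auto
    have "vec c (\<lambda>j. x$j) = y" using y unfolding x_def by auto
    moreover have "x$c = t" unfolding x_def by auto
    ultimately have "appcol B w *\<^sub>v x = z" using appcol_mult[OF B w x] z by simp
    then show "z \<in> img (appcol B w) (Suc c)" unfolding img_def using x by blast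
  qed
qed

lemma img_zero_cols: assumes F: "F \<in> carrier_mat n 0" shows "img F 0 = {0\<^sub>v n}"
proof -
  have "F *\<^sub>v v = 0\<^sub>v n" if "v \<in> carrier_vec 0" for v
    using F that by (intro eq_vecI) (auto simp: scalar_prod_def)
  moreover have "carrier_vec 0 = {0\<^sub>v 0}" by (auto intro!: eq_vecI)
  ultimately show ?thesis unfolding img_def by auto
qed

lemma img_factor:
  fixes F :: "'a::field mat"
  assumes F: "F \<in> carrier_mat n m"
  shows "\<exists>c B. B \<in> carrier_mat n c \<and> (\<forall>x\<in>carrier_vec c. B *\<^sub>v x = 0\<^sub>v n \<longrightarrow> x = 0\<^sub>v c) \<and> img B c = img F m"
  using F
proof (induction m arbitrary: F)
  case 0
  show ?case
    by (rule exI[of _ 0], rule exI[of _ "0\<^sub>m n 0"]) (use 0 img_zero_cols[of "0\<^sub>m n 0" n] img_zero_cols[of F n] in auto)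
next
  case (Suc m)
  define F0 where "F0 = mat n m (\<lambda>ij. F $$ ij)"
  define w where "w = col F m"
  have F0: "F0 \<in> carrier_mat n m" unfolding F0_def by auto
  have w: "w \<in> carrier_vec n" unfolding w_def using Suc.prems by auto
  have FF: "F = appcol F0 w"
    using Suc.prems unfolding appcol_def F0_def w_def by (intro eq_matI) (auto simp: less_Suc_eq)
  obtain c B where B: "B \<in> carrier_mat n c" and Bk: "\<forall>x\<in>carrier_vec c. B *\<^sub>v x = 0\<^sub>v n \<longrightarrow> x = 0\<^sub>v c"
    and BI: "img B c = img F0 m" using Suc.IH[OF F0] by blast
  have imgF: "img F (Suc m) = {F0 *\<^sub>v y + t \<cdot>\<^sub>v w | y t. y \<in> carrier_vec m}"
    unfolding FF using img_appcol[OF F0 w] .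
  also have "\<dots> = {B *\<^sub>v y + t \<cdot>\<^sub>v w | y t. y \<in> carrier_vec c}"
  proof -
    have e1: "{F0 *\<^sub>v y + t \<cdot>\<^sub>v w | y t. y \<in> carrier_vec m} = {u + t \<cdot>\<^sub>v w | u t. u \<in> img F0 m}"
      unfolding img_def by blast
    have e2: "{B *\<^sub>v y + t \<cdot>\<^sub>v w | y t. y \<in> carrier_vec c} = {u + t \<cdot>\<^sub>v w | u t. u \<in> img B c}"
      unfolding img_def by blast
    show ?thesis unfolding e1 e2 BI ..
  qed
  finally have imgF': "img F (Suc m) = {B *\<^sub>v y + t \<cdot>\<^sub>v w | y t. y \<in> carrier_vec c}" .
  show ?case
  proof (cases "\<exists>z\<in>carrier_vec c. w = B *\<^sub>v z")
    case True
    then obtain z where z: "z \<in> carrier_vec c" and wz: "w = B *\<^sub>v z" by blast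
    have "img B c = img F (Suc m)"
    proof
      show "img B c \<subseteq> img F (Suc m)"
      proof
        fix u assume "u \<in> img B c"
        then obtain y where y: "y \<in> carrier_vec c" "u = B *\<^sub>v y" unfolding img_def by auto
        then have "u = B *\<^sub>v y + 0 \<cdot>\<^sub>v w" using B w by auto
        then show "u \<in> img F (Suc m)" unfolding imgF' using y by blast
      qed
    next
      show "img F (Suc m) \<subseteq> img B c"
      proof
        fix u assume "u \<in> img F (Suc m)"
        then obtain y t where y: "y \<in> carrier_vec c" and u: "u = B *\<^sub>v y + t \<cdot>\<^sub>v w" unfolding imgF' by auto
        have "u = B *\<^sub>v (y + t \<cdot>\<^sub>v z)" unfolding u wz using B y z
          by (simp add: mult_add_distrib_mat_vec mult_mat_vec)
        then show "u \<in> img B c" unfolding img_def using y z by auto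
      qed
    qed
    then show ?thesis using B Bk by blast
  next
    case False
    have B': "appcol B w \<in> carrier_mat n (Suc c)" using appcol_carrier[OF B] .
    have "img (appcol B w) (Suc c) = img F (Suc m)" unfolding imgF' img_appcol[OF B w] ..
    moreover have "\<forall>x\<in>carrier_vec (Suc c). appcol B w *\<^sub>v x = 0\<^sub>v n \<longrightarrow> x = 0\<^sub>v (Suc c)"
    proof (intro ballI impI)
      fix x assume x: "x \<in> carrier_vec (Suc c)" and x0: "appcol B w *\<^sub>v x = 0\<^sub>v n"
      define x' where "x' = vec c (\<lambda>j. x$j)"
      have x': "x' \<in> carrier_vec c" unfolding x'_def by auto
      have eq: "B *\<^sub>v x' + x$c \<cdot>\<^sub>v w = 0\<^sub>v n" using x0 appcol_mult[OF B w x] unfolding x'_def by simp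
      have xc: "x$c = 0"
      proof (rule ccontr)
        assume nz: "x$c \<noteq> 0"
        have "w = B *\<^sub>v ((- 1 / x$c) \<cdot>\<^sub>v x')"
        proof (rule eq_vecI)
          fix i assume "i < dim_vec (B *\<^sub>v ((- 1 / x$c) \<cdot>\<^sub>v x'))"
          then have i: "i < n" using B by auto
          have "(B *\<^sub>v x') $ i + x$c * w$i = 0" using arg_cong[OF eq, of "\<lambda>v. v $ i"] i B w x' by simp
          then have "w $ i * x$c = - (B *\<^sub>v x') $ i" by (simp add: add_eq_0_iff mult.commute)
          then have "w $ i = - (B *\<^sub>v x') $ i / x$c" using nz by (simp add: field_simps)
          then show "w $ i = (B *\<^sub>v ((- 1 / x$c) \<cdot>\<^sub>v x')) $ i"
            using i B x' by (simp add: mult_mat_vec)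
        qed (use B w in auto)
        then show False using False x' by auto
      qed
      then have "B *\<^sub>v x' = 0\<^sub>v n" using eq B w x' by simp
      then have "x' = 0\<^sub>v c" using Bk x' by auto
      show "x = 0\<^sub>v (Suc c)"
      proof (rule eq_vecI)
        fix i assume "i < dim_vec (0\<^sub>v (Suc c) :: 'a vec)"
        then have i: "i < Suc c" by simp
        show "x $ i = 0\<^sub>v (Suc c) $ i"
        proof (cases "i < c")
          case True
          then have "x' $ i = 0" using \<open>x' = 0\<^sub>v c\<close> by simp
          then show ?thesis using True i unfolding x'_def by simp
        next
          case False
          then have "i = c" using i by simp
          then show ?thesis using xc by simp
        qed
      qed (use x in simp)
    qed
    ultimately show ?thesis using B' by blast
  qed
qed



lemma is_modD:
  assumes "is_mod Alg l M"
  shows "\<And>a. a \<in> snd Alg \<Longrightarrow> snd M a \<in> carrier_mat (fst M) (fst M)"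
    and "snd M (1\<^sub>m (fst Alg)) = 1\<^sub>m (fst M)"
    and "\<And>a b. a \<in> snd Alg \<Longrightarrow> b \<in> snd Alg \<Longrightarrow> snd M (a + b) = snd M a + snd M b"
    and "\<And>c a. a \<in> snd Alg \<Longrightarrow> snd M (c \<cdot>\<^sub>m a) = c \<cdot>\<^sub>m snd M a"
    and "\<And>a b. a \<in> snd Alg \<Longrightarrow> b \<in> snd Alg \<Longrightarrow> snd M (a * b) = (if l then snd M a * snd M b else snd M b * snd M a)"
  using assms unfolding is_mod_def Let_def by auto

lemma fd_algebraD:
  assumes "fd_algebra Alg"
  shows "snd Alg \<subseteq> carrier_mat (fst Alg) (fst Alg)" "1\<^sub>m (fst Alg) \<in> snd Alg"
    "\<And>a b. a \<in> snd Alg \<Longrightarrow> b \<in> snd Alg \<Longrightarrow> a + b \<in> snd Alg"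
    "\<And>a b. a \<in> snd Alg \<Longrightarrow> b \<in> snd Alg \<Longrightarrow> a * b \<in> snd Alg"
    "\<And>c a. a \<in> snd Alg \<Longrightarrow> c \<cdot>\<^sub>m a \<in> snd Alg"
    "0\<^sub>m (fst Alg) (fst Alg) \<in> snd Alg"
  using assms unfolding fd_algebra_def Let_def by auto

lemma is_homD: "is_hom Alg M N F \<Longrightarrow> F \<in> carrier_mat (fst N) (fst M)"
  "is_hom Alg M N F \<Longrightarrow> a \<in> snd Alg \<Longrightarrow> F * snd M a = snd N a * F"
  unfolding is_hom_def by auto

lemma mat_col_unit: "(A::'a::field mat) \<in> carrier_mat n m \<Longrightarrow> j < m \<Longrightarrow> A *\<^sub>v unit_vec m j = col A j"
  by (intro eq_vecI) auto

lemma mat_eq_vecI: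
  fixes A :: "'a::field mat"
  assumes A: "A \<in> carrier_mat n m" and B: "B \<in> carrier_mat n m"
    and eq: "\<And>x. x \<in> carrier_vec m \<Longrightarrow> A *\<^sub>v x = B *\<^sub>v x"
  shows "A = B"
proof (rule mat_col_eqI)
  fix j assume "j < dim_col B"
  then have j: "j < m" using B by auto
  show "col A j = col B j" using eq[of "unit_vec m j"] mat_col_unit[OF A j] mat_col_unit[OF B j] by simp
qed (use A B in auto)

lemma vec_minus_zero:
  fixes x :: "'a::field vec"
  assumes x: "x \<in> carrier_vec c" and y: "y \<in> carrier_vec c" and e: "x - y = 0\<^sub>v c"
  shows "x = y"
proof (rule eq_vecI)
  fix i assume "i < dim_vec y"
  then have i: "i < c" using y by auto
  have "(x - y) $ i = 0" using e i by simp
  then show "x $ i = y $ i" using i x y by simp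
qed (use x y in auto)

lemma kern_inj:
  fixes B :: "'a::field mat"
  assumes B: "B \<in> carrier_mat n c" and k: "\<forall>x\<in>carrier_vec c. B *\<^sub>v x = 0\<^sub>v n \<longrightarrow> x = 0\<^sub>v c"
    and x: "x \<in> carrier_vec c" and y: "y \<in> carrier_vec c" and e: "B *\<^sub>v x = B *\<^sub>v y"
  shows "x = y"
proof -
  have "B *\<^sub>v (x - y) = 0\<^sub>v n" using B x y e by (simp add: mult_minus_distrib_mat_vec)
  then have "x - y = 0\<^sub>v c" using k x y by auto
  show ?thesis
  proof (rule eq_vecI)
    fix i assume "i < dim_vec y"
    then have i: "i < c" using y by auto
    have "(x - y) $ i = 0" using \<open>x - y = 0\<^sub>v c\<close> i by simp
    then show "x $ i = y $ i" using i x y by simp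
  qed (use x y in auto)
qed

lemma mat_cancel:
  fixes B :: "'a::field mat"
  assumes B: "B \<in> carrier_mat n c" and k: "\<forall>x\<in>carrier_vec c. B *\<^sub>v x = 0\<^sub>v n \<longrightarrow> x = 0\<^sub>v c"
    and X: "X \<in> carrier_mat c q" and Y: "Y \<in> carrier_mat c q" and e: "B * X = B * Y"
  shows "X = Y"
proof (rule mat_col_eqI)
  fix j assume "j < dim_col Y"
  then have j: "j < q" using Y by auto
  have "B *\<^sub>v col X j = B *\<^sub>v col Y j" using col_mult2[OF B X j] col_mult2[OF B Y j] e by simp
  then show "col X j = col Y j" using kern_inj[OF B k] X Y j by auto
qed (use X Y in auto)



lemma hom_img_closed:
  assumes f: "is_hom Alg M N f" and M: "is_mod Alg l M" and N: "is_mod Alg l' N" and a: "a \<in> snd Alg"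
    and y: "y \<in> img f (fst M)"
  shows "snd N a *\<^sub>v y \<in> img f (fst M)"
proof -
  obtain x where x: "x \<in> carrier_vec (fst M)" and yx: "y = f *\<^sub>v x" using y unfolding img_def by auto
  have fc: "f \<in> carrier_mat (fst N) (fst M)" using is_homD(1)[OF f] .
  have rM: "snd M a \<in> carrier_mat (fst M) (fst M)" using is_modD(1)[OF M a] .
  have "snd N a *\<^sub>v y = (snd N a * f) *\<^sub>v x"
    unfolding yx using fc x is_modD(1)[OF N a] by simp
  also have "\<dots> = f *\<^sub>v (snd M a *\<^sub>v x)" using is_homD(2)[OF f a, symmetric] fc rM x by simp
  finally show ?thesis unfolding img_def using rM x by auto
qed

lemma gen_inj:
  fixes Alg :: "('k::field) alg"
  assumes A: "fd_algebra Alg" and E: "injective_mod Alg l E" and M: "is_mod Alg l M" and N: "is_mod Alg l N"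
   and f: "is_hom Alg M N f" and g: "is_hom Alg M E g"
   and kr: "ker f (fst M) \<subseteq> ker g (fst M)"
  shows "\<exists>h. is_hom Alg N E h \<and> h * f = g"
proof -
  define m where "m = fst M"
  define n where "n = fst N"
  define e where "e = fst E"
  have fc: "f \<in> carrier_mat n m" using is_homD(1)[OF f] unfolding m_def n_def .
  have gc: "g \<in> carrier_mat e m" using is_homD(1)[OF g] unfolding m_def e_def .
  have EM: "is_mod Alg l E" using E unfolding injective_mod_def by auto
  obtain c B where B: "B \<in> carrier_mat n c" and Bk: "\<forall>x\<in>carrier_vec c. B *\<^sub>v x = 0\<^sub>v n \<longrightarrow> x = 0\<^sub>v c"
    and BI: "img B c = img f m" using img_factor[OF fc] by blast
  define pre where "pre y = (SOME x. x \<in> carrier_vec c \<and> B *\<^sub>v x = y)" for y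
  have pre: "pre y \<in> carrier_vec c \<and> B *\<^sub>v pre y = y" if "y \<in> img f m" for y
  proof -
    have "y \<in> img B c" using that BI by simp
    then have "\<exists>x. x \<in> carrier_vec c \<and> B *\<^sub>v x = y" unfolding img_def by auto
    then show ?thesis unfolding pre_def by (rule someI_ex)
  qed
  have colB: "col B j \<in> img f m" if "j < c" for j
  proof -
    have "B *\<^sub>v unit_vec c j \<in> img B c" unfolding img_def by (rule imageI) simp
    then show ?thesis using BI mat_col_unit[OF B that] by simp
  qed
  have colf: "col f j \<in> img f m" if "j < m" for j
  proof -
    have "f *\<^sub>v unit_vec m j \<in> img f m" unfolding img_def by (rule imageI) simp
    then show ?thesis using mat_col_unit[OF fc that] by simp
  qed
  define \<rho>U where "\<rho>U a = mat c c (\<lambda>(i,j). pre (snd N a *\<^sub>v col B j) $ i)" for a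
  define U where "U = (c, \<rho>U)"
  have rN: "snd N a \<in> carrier_mat n n" if "a \<in> snd Alg" for a using is_modD(1)[OF N that] unfolding n_def .
  have rM: "snd M a \<in> carrier_mat m m" if "a \<in> snd Alg" for a using is_modD(1)[OF M that] unfolding m_def .
  have rE: "snd E a \<in> carrier_mat e e" if "a \<in> snd Alg" for a using is_modD(1)[OF EM that] unfolding e_def .
  have rU: "\<rho>U a \<in> carrier_mat c c" for a unfolding \<rho>U_def by auto
  have BrU: "B * \<rho>U a = snd N a * B" if a: "a \<in> snd Alg" for a
  proof (rule mat_col_eqI)
    fix j assume "j < dim_col (snd N a * B)"
    then have j: "j < c" using B rN[OF a] by auto
    have inimg: "snd N a *\<^sub>v col B j \<in> img f m"
      using hom_img_closed[OF f M N a] colB[OF j] unfolding m_def by auto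
    have "col (\<rho>U a) j = pre (snd N a *\<^sub>v col B j)"
      unfolding \<rho>U_def using j pre[OF inimg] by (intro eq_vecI) auto
    then show "col (B * \<rho>U a) j = col (snd N a * B) j"
      using col_mult2[OF B rU j] col_mult2[OF rN[OF a] B j] pre[OF inimg] by simp
  qed (use B rU rN[OF a] in auto)
  have cancel: "X = Y" if "X \<in> carrier_mat c q" "Y \<in> carrier_mat c q" "B * X = B * Y" for X Y q
    using mat_cancel[OF B Bk that] .
  have Ad: "snd Alg \<subseteq> carrier_mat (fst Alg) (fst Alg)" using fd_algebraD(1)[OF A] .
  have U: "is_mod Alg l U"
    unfolding is_mod_def Let_def U_def fst_conv snd_conv
  proof (intro conjI ballI allI)
    fix a assume "a \<in> snd Alg" then show "\<rho>U a \<in> carrier_mat c c" using rU by auto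
  next
    have eq: "B * \<rho>U (1\<^sub>m (fst Alg)) = B * 1\<^sub>m c"
      using BrU[OF fd_algebraD(2)[OF A]] is_modD(2)[OF N] B unfolding n_def by simp
    show "\<rho>U (1\<^sub>m (fst Alg)) = 1\<^sub>m c" by (rule cancel[OF _ _ eq]) (use rU in auto)
  next
    fix a b assume a: "a \<in> snd Alg" and b: "b \<in> snd Alg"
    have eq: "B * \<rho>U (a + b) = B * (\<rho>U a + \<rho>U b)"
      using BrU[OF fd_algebraD(3)[OF A a b]] is_modD(3)[OF N a b] BrU[OF a] BrU[OF b] B rN[OF a] rN[OF b] rU
        mult_add_distrib_mat[OF B rU rU]
      by (simp add: add_mult_distrib_mat)
    show "\<rho>U (a + b) = \<rho>U a + \<rho>U b" by (rule cancel[OF _ _ eq]) (use rU in auto)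
  next
    fix k a assume a: "a \<in> snd Alg"
    have eq: "B * \<rho>U (k \<cdot>\<^sub>m a) = B * (k \<cdot>\<^sub>m \<rho>U a)"
      using BrU[OF fd_algebraD(5)[OF A a]] is_modD(4)[OF N a] BrU[OF a] B rN[OF a] rU
        mult_smult_distrib[OF B rU]
      by (simp add: mult_smult_assoc_mat)
    show "\<rho>U (k \<cdot>\<^sub>m a) = k \<cdot>\<^sub>m \<rho>U a" by (rule cancel[OF _ _ eq]) (use rU in auto)
  next
    fix a b assume a: "a \<in> snd Alg" and b: "b \<in> snd Alg"
    have eq: "B * \<rho>U (a * b) = B * (if l then \<rho>U a * \<rho>U b else \<rho>U b * \<rho>U a)"
    proof (cases l)
      case True
      have "B * \<rho>U (a * b) = snd N a * (snd N b * B)"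
        using BrU[OF fd_algebraD(4)[OF A a b]] is_modD(5)[OF N a b] True B rN[OF a] rN[OF b] by simp
      also have "\<dots> = snd N a * (B * \<rho>U b)" using BrU[OF b] by simp
      also have "\<dots> = (snd N a * B) * \<rho>U b" by (rule assoc_mult_mat[symmetric, OF rN[OF a] B rU])
      also have "\<dots> = (B * \<rho>U a) * \<rho>U b" using BrU[OF a] by simp
      also have "\<dots> = B * (\<rho>U a * \<rho>U b)" by (rule assoc_mult_mat[OF B rU rU])
      finally show ?thesis using True by simp
    next
      case False
      have "B * \<rho>U (a * b) = snd N b * (snd N a * B)"
        using BrU[OF fd_algebraD(4)[OF A a b]] is_modD(5)[OF N a b] False B rN[OF a] rN[OF b] by simp
      also have "\<dots> = snd N b * (B * \<rho>U a)" using BrU[OF a] by simp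
      also have "\<dots> = (snd N b * B) * \<rho>U a" by (rule assoc_mult_mat[symmetric, OF rN[OF b] B rU])
      also have "\<dots> = (B * \<rho>U b) * \<rho>U a" using BrU[OF b] by simp
      also have "\<dots> = B * (\<rho>U b * \<rho>U a)" by (rule assoc_mult_mat[OF B rU rU])
      finally show ?thesis using False by simp
    qed
    show "\<rho>U (a * b) = (if l then \<rho>U a * \<rho>U b else \<rho>U b * \<rho>U a)"
      by (rule cancel[OF _ _ eq]) (use rU[of a] rU[of b] rU[of "a * b"] in auto)
  qed
  have BU: "is_hom Alg U N B" unfolding is_hom_def U_def using B BrU unfolding n_def by auto
  have Binj: "inj_on (\<lambda>v. B *\<^sub>v v) (carrier_vec (fst U))"
    unfolding U_def using kern_inj[OF B Bk] by (auto intro!: inj_onI)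
  define H where "H = mat m c (\<lambda>(i,j). (SOME x. x \<in> carrier_vec m \<and> f *\<^sub>v x = col B j) $ i)"
  have Hc: "H \<in> carrier_mat m c" unfolding H_def by auto
  have fH: "f * H = B"
  proof (rule mat_col_eqI)
    fix j assume "j < dim_col B"
    then have j: "j < c" using B by auto
    have "\<exists>x. x \<in> carrier_vec m \<and> f *\<^sub>v x = col B j" using colB[OF j] unfolding img_def by auto
    then have sx: "(SOME x. x \<in> carrier_vec m \<and> f *\<^sub>v x = col B j) \<in> carrier_vec m \<and> f *\<^sub>v (SOME x. x \<in> carrier_vec m \<and> f *\<^sub>v x = col B j) = col B j"
      by (rule someI_ex)
    have "col H j = (SOME x. x \<in> carrier_vec m \<and> f *\<^sub>v x = col B j)"
      unfolding H_def using j sx by (intro eq_vecI) auto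
    then show "col (f * H) j = col B j" using col_mult2[OF fc Hc j] sx by simp
  qed (use fc Hc B in auto)
  define G where "G = mat c m (\<lambda>(i,j). pre (col f j) $ i)"
  have Gc: "G \<in> carrier_mat c m" unfolding G_def by auto
  have BG: "B * G = f"
  proof (rule mat_col_eqI)
    fix j assume "j < dim_col f"
    then have j: "j < m" using fc by auto
    have "col G j = pre (col f j)"
      unfolding G_def using j pre[OF colf[OF j]] by (intro eq_vecI) auto
    then show "col (B * G) j = col f j" using col_mult2[OF B Gc j] pre[OF colf[OF j]] by simp
  qed (use fc Gc B in auto)
  have GH: "G * H = 1\<^sub>m c"
  proof -
    have "B * (G * H) = (B * G) * H" using B Gc Hc by simp
    also have "\<dots> = B" using BG fH by simp
    also have "\<dots> = B * 1\<^sub>m c" using B by simp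
    finally have "B * (G * H) = B * 1\<^sub>m c" .
    then show ?thesis using cancel[of "G * H" c "1\<^sub>m c"] Gc Hc by auto
  qed
  have gHG: "g * H * G = g"
  proof (rule mat_eq_vecI[of _ e m])
    show "g * H * G \<in> carrier_mat e m" using gc Hc Gc by auto
    show "g \<in> carrier_mat e m" using gc .
    fix x :: "'k vec" assume x: "x \<in> carrier_vec m"
    have "f * (H * G) = (f * H) * G" using fc Hc Gc by simp
    then have fHG: "f * (H * G) = f" using fH BG by simp
    have HGc: "H * G \<in> carrier_mat m m" using Hc Gc by simp
    have e1: "f *\<^sub>v (H *\<^sub>v (G *\<^sub>v x) - x) = f *\<^sub>v (H *\<^sub>v (G *\<^sub>v x)) - f *\<^sub>v x"
      using fc Hc Gc x by (simp add: mult_minus_distrib_mat_vec)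
    have "f *\<^sub>v (H *\<^sub>v (G *\<^sub>v x)) = f *\<^sub>v ((H * G) *\<^sub>v x)"
      using assoc_mult_mat_vec[OF Hc Gc x] by simp
    also have "\<dots> = (f * (H * G)) *\<^sub>v x" using assoc_mult_mat_vec[OF fc HGc x] by simp
    also have "\<dots> = f *\<^sub>v x" using fHG by simp
    finally have "f *\<^sub>v (H *\<^sub>v (G *\<^sub>v x) - x) = f *\<^sub>v x - f *\<^sub>v x" using e1 by simp
    then have "H *\<^sub>v (G *\<^sub>v x) - x \<in> ker f m"
      unfolding ker_def using fc x Hc Gc by auto
    then have "g *\<^sub>v (H *\<^sub>v (G *\<^sub>v x) - x) = 0\<^sub>v e" using kr gc unfolding ker_def m_def by auto
    then have d0: "g *\<^sub>v (H *\<^sub>v (G *\<^sub>v x)) - g *\<^sub>v x = 0\<^sub>v e"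
      using gc Hc Gc x by (simp add: mult_minus_distrib_mat_vec)
    have "g *\<^sub>v (H *\<^sub>v (G *\<^sub>v x)) = g *\<^sub>v x"
      by (rule vec_minus_zero[OF _ _ d0]) (use gc Hc Gc x in auto)
    then show "(g * H * G) *\<^sub>v x = g *\<^sub>v x" using gc Hc Gc x HGc assoc_mult_mat_vec[OF gc HGc x] assoc_mult_mat_vec[OF Hc Gc x] by simp
  qed
  have GM: "G * snd M a = \<rho>U a * G" if a: "a \<in> snd Alg" for a
  proof -
    have "B * (G * snd M a) = (B * G) * snd M a" using B Gc rM[OF a] by simp
    also have "\<dots> = f * snd M a" using BG by simp
    also have "\<dots> = snd N a * f" using is_homD(2)[OF f a] .
    also have "\<dots> = (snd N a * B) * G" using BG B Gc rN[OF a] by simp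
    also have "\<dots> = (B * \<rho>U a) * G" using BrU[OF a] by simp
    also have "\<dots> = B * (\<rho>U a * G)" by (rule assoc_mult_mat[OF B rU Gc])
    finally show ?thesis using cancel[of "G * snd M a" m "\<rho>U a * G"] Gc rM[OF a] rU[of a] by auto
  qed
  have gH: "is_hom Alg U E (g * H)"
    unfolding is_hom_def U_def fst_conv snd_conv
  proof (intro conjI ballI)
    show "g * H \<in> carrier_mat (fst E) c" using gc Hc unfolding e_def by auto
    fix a assume a: "a \<in> snd Alg"
    have gHc: "g * H \<in> carrier_mat e c" using gc Hc by simp
    have GMc: "G * snd M a \<in> carrier_mat c m" using Gc rM[OF a] by simp
    have "g * H * \<rho>U a = g * H * (\<rho>U a * (G * H))" using GH rU[of a] right_mult_one_mat[OF rU[of a]] by simp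
    also have "\<dots> = g * H * ((\<rho>U a * G) * H)" using assoc_mult_mat[OF rU Gc Hc] by simp
    also have "\<dots> = g * H * ((G * snd M a) * H)" using GM[OF a] by simp
    also have "\<dots> = ((g * H) * (G * snd M a)) * H" by (rule assoc_mult_mat[symmetric, OF gHc GMc Hc])
    also have "\<dots> = (g * H * G) * snd M a * H" by (subst assoc_mult_mat[OF gHc Gc rM[OF a]]) (rule refl)
    also have "\<dots> = g * snd M a * H" using gHG by simp
    also have "\<dots> = snd E a * g * H" using is_homD(2)[OF g a] by simp
    also have "\<dots> = snd E a * (g * H)" using rE[OF a] gc Hc by simp
    finally show "g * H * \<rho>U a = snd E a * (g * H)" .
  qed
  obtain h where h: "is_hom Alg N E h" and hB: "h * B = g * H"
    using E unfolding injective_mod_def using U N BU Binj gH by blast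
  have hc: "h \<in> carrier_mat e n" using is_homD(1)[OF h] unfolding e_def n_def .
  have "h * f = g"
  proof -
    have "h * f = h * B * G" using BG hc B Gc by simp
    also have "\<dots> = g * H * G" using hB by simp
    finally show ?thesis using gHG by simp
  qed
  then show ?thesis using h by blast
qed



lemma hom_comp:
  assumes M: "is_mod Alg l M" and N: "is_mod Alg l N" and P: "is_mod Alg l P"
    and F: "is_hom Alg M N F" and G: "is_hom Alg N P G"
  shows "is_hom Alg M P (G * F)"
  unfolding is_hom_def
proof (intro conjI ballI)
  have Fc: "F \<in> carrier_mat (fst N) (fst M)" using is_homD(1)[OF F] .
  have Gc: "G \<in> carrier_mat (fst P) (fst N)" using is_homD(1)[OF G] .
  show "G * F \<in> carrier_mat (fst P) (fst M)" using Fc Gc by simp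
  fix a assume a: "a \<in> snd Alg"
  have rM: "snd M a \<in> carrier_mat (fst M) (fst M)" using is_modD(1)[OF M a] .
  have rN: "snd N a \<in> carrier_mat (fst N) (fst N)" using is_modD(1)[OF N a] .
  have rP: "snd P a \<in> carrier_mat (fst P) (fst P)" using is_modD(1)[OF P a] .
  have "G * F * snd M a = G * (F * snd M a)" using Gc Fc rM by simp
  also have "\<dots> = G * (snd N a * F)" using is_homD(2)[OF F a] by simp
  also have "\<dots> = (G * snd N a) * F" using Gc Fc rN by simp
  also have "\<dots> = (snd P a * G) * F" using is_homD(2)[OF G a] by simp
  also have "\<dots> = snd P a * (G * F)" using Gc Fc rP by simp
  finally show "G * F * snd M a = snd P a * (G * F)" .
qed

lemma inj_coresD:
  assumes "inj_coresolution Alg l M I d \<epsilon>"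
  shows "is_mod Alg l M" "\<And>i. injective_mod Alg l (I i)" "\<And>i. is_mod Alg l (I i)"
    "is_hom Alg M (I 0) \<epsilon>" "\<And>i. is_hom Alg (I i) (I (Suc i)) (d i)"
    "ker \<epsilon> (fst M) = {0\<^sub>v (fst M)}"
    "img \<epsilon> (fst M) = ker (d 0) (fst (I 0))"
    "\<And>i. img (d i) (fst (I i)) = ker (d (Suc i)) (fst (I (Suc i)))"
  using assms unfolding inj_coresolution_def injective_mod_def by auto

lemma ker_zero_inj:
  fixes \<epsilon> :: "'k::field mat"
  assumes c: "\<epsilon> \<in> carrier_mat n m" and k: "ker \<epsilon> m = {0\<^sub>v m}"
  shows "\<forall>x\<in>carrier_vec m. \<epsilon> *\<^sub>v x = 0\<^sub>v n \<longrightarrow> x = 0\<^sub>v m"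
  using k c unfolding ker_def by auto

lemma comparison:
  fixes Alg :: "('k::field) alg"
  assumes A: "fd_algebra Alg"
   and CI: "inj_coresolution Alg l X I d \<epsilon>"
   and CJ: "inj_coresolution Alg l Y J e \<epsilon>'"
   and \<alpha>: "is_hom Alg X Y \<alpha>"
  shows "\<exists>\<phi>. (\<forall>k. is_hom Alg (I k) (J k) (\<phi> k)) \<and> \<phi> 0 * \<epsilon> = \<epsilon>' * \<alpha> \<and> (\<forall>k. \<phi> (Suc k) * d k = e k * \<phi> k)"
proof -
  note I = inj_coresD[OF CI] and J = inj_coresD[OF CJ]
  define \<phi>0 where "\<phi>0 = (SOME h. is_hom Alg (I 0) (J 0) h \<and> h * \<epsilon> = \<epsilon>' * \<alpha>)"
  define \<phi> where "\<phi> = rec_nat \<phi>0 (\<lambda>k p. SOME h. is_hom Alg (I (Suc k)) (J (Suc k)) h \<and> h * d k = e k * p)"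
  have \<phi>0: "\<phi> 0 = \<phi>0" unfolding \<phi>_def by simp
  have \<phi>S: "\<phi> (Suc k) = (SOME h. is_hom Alg (I (Suc k)) (J (Suc k)) h \<and> h * d k = e k * \<phi> k)" for k
    unfolding \<phi>_def by simp
  have ec: "\<epsilon> \<in> carrier_mat (fst (I 0)) (fst X)" using is_homD(1)[OF I(4)] .
  have e'c: "\<epsilon>' \<in> carrier_mat (fst (J 0)) (fst Y)" using is_homD(1)[OF J(4)] .
  have \<alpha>c: "\<alpha> \<in> carrier_mat (fst Y) (fst X)" using is_homD(1)[OF \<alpha>] .
  have dc: "d k \<in> carrier_mat (fst (I (Suc k))) (fst (I k))" for k using is_homD(1)[OF I(5)] .
  have ecc: "e k \<in> carrier_mat (fst (J (Suc k))) (fst (J k))" for k using is_homD(1)[OF J(5)] .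
  have base: "is_hom Alg (I 0) (J 0) (\<phi> 0) \<and> \<phi> 0 * \<epsilon> = \<epsilon>' * \<alpha>"
  proof -
    have ex: "\<exists>h. is_hom Alg (I 0) (J 0) h \<and> h * \<epsilon> = \<epsilon>' * \<alpha>"
    proof -
      have inj: "inj_on (\<lambda>v. \<epsilon> *\<^sub>v v) (carrier_vec (fst X))"
        using kern_inj[OF ec ker_zero_inj[OF ec I(6)]] by (auto intro!: inj_onI)
      have g: "is_hom Alg X (J 0) (\<epsilon>' * \<alpha>)" using hom_comp[OF I(1) J(1) J(3) \<alpha> J(4)] .
      show ?thesis using J(2)[of 0] unfolding injective_mod_def using I(1) I(3) I(4) inj g by blast
    qed
    show ?thesis unfolding \<phi>0 \<phi>0_def using someI_ex[OF ex] .
  qed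
  have inv: "is_hom Alg (I k) (J k) (\<phi> k) \<and>
      (\<forall>x\<in>ker (d k) (fst (I k)). e k *\<^sub>v (\<phi> k *\<^sub>v x) = 0\<^sub>v (fst (J (Suc k))))
      \<and> (k > 0 \<longrightarrow> \<phi> k * d (k - 1) = e (k - 1) * \<phi> (k - 1))" for k
  proof (induction k)
    case 0
    have "e 0 *\<^sub>v (\<phi> 0 *\<^sub>v x) = 0\<^sub>v (fst (J (Suc 0)))" if x: "x \<in> ker (d 0) (fst (I 0))" for x
    proof -
      obtain z where z: "z \<in> carrier_vec (fst X)" and xz: "x = \<epsilon> *\<^sub>v z"
        using x I(7) unfolding img_def by blast
      have p0: "\<phi> 0 \<in> carrier_mat (fst (J 0)) (fst (I 0))" using is_homD(1) base by blast
      have "\<phi> 0 *\<^sub>v x = (\<phi> 0 * \<epsilon>) *\<^sub>v z" using xz p0 ec z by simp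
      also have "\<dots> = \<epsilon>' *\<^sub>v (\<alpha> *\<^sub>v z)" using base e'c \<alpha>c z by simp
      finally have "\<phi> 0 *\<^sub>v x \<in> img \<epsilon>' (fst Y)" unfolding img_def using \<alpha>c z by auto
      then show ?thesis using J(7) unfolding ker_def using ecc[of 0] by auto
    qed
    then show ?case using base by simp
  next
    case (Suc k)
    have pk: "\<phi> k \<in> carrier_mat (fst (J k)) (fst (I k))" using is_homD(1) Suc.IH by blast
    have ex: "\<exists>h. is_hom Alg (I (Suc k)) (J (Suc k)) h \<and> h * d k = e k * \<phi> k"
    proof (rule gen_inj[OF A J(2)[of "Suc k"] I(3)[of k] I(3)[of "Suc k"] I(5)[of k]])
      show "is_hom Alg (I k) (J (Suc k)) (e k * \<phi> k)"
        using hom_comp[OF I(3) J(3) J(3) _ J(5)] Suc.IH by blast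
      show "ker (d k) (fst (I k)) \<subseteq> ker (e k * \<phi> k) (fst (I k))"
      proof
        fix x assume x: "x \<in> ker (d k) (fst (I k))"
        then have xc: "x \<in> carrier_vec (fst (I k))" unfolding ker_def by auto
        have "(e k * \<phi> k) *\<^sub>v x = 0\<^sub>v (fst (J (Suc k)))" using Suc.IH x ecc[of k] pk xc by simp
        then show "x \<in> ker (e k * \<phi> k) (fst (I k))" unfolding ker_def using xc ecc[of k] pk by simp
      qed
    qed
    have S: "is_hom Alg (I (Suc k)) (J (Suc k)) (\<phi> (Suc k)) \<and> \<phi> (Suc k) * d k = e k * \<phi> k"
      unfolding \<phi>S using someI_ex[OF ex] .
    have pS: "\<phi> (Suc k) \<in> carrier_mat (fst (J (Suc k))) (fst (I (Suc k)))" using is_homD(1) S by blast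
    have "e (Suc k) *\<^sub>v (\<phi> (Suc k) *\<^sub>v x) = 0\<^sub>v (fst (J (Suc (Suc k))))"
      if x: "x \<in> ker (d (Suc k)) (fst (I (Suc k)))" for x
    proof -
      obtain z where z: "z \<in> carrier_vec (fst (I k))" and xz: "x = d k *\<^sub>v z"
        using x I(8)[of k] unfolding img_def by blast
      have "\<phi> (Suc k) *\<^sub>v x = (\<phi> (Suc k) * d k) *\<^sub>v z" using xz pS dc[of k] z by simp
      also have "\<dots> = e k *\<^sub>v (\<phi> k *\<^sub>v z)" using S ecc[of k] pk z by simp
      finally have "\<phi> (Suc k) *\<^sub>v x \<in> img (e k) (fst (J k))" unfolding img_def using pk z by auto
      then show ?thesis using J(8)[of k] unfolding ker_def using ecc[of "Suc k"] by auto
    qed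
    then show ?case using S by simp
  qed
  have "\<phi> (Suc k) * d k = e k * \<phi> k" for k using inv[of "Suc k"] by simp
  then show ?thesis using inv base by blast
qed



lemma smult_mat_mult_vec:
  fixes A :: "'k::field mat"
  assumes "A \<in> carrier_mat n m" "v \<in> carrier_vec m"
  shows "(c \<cdot>\<^sub>m A) *\<^sub>v v = c \<cdot>\<^sub>v (A *\<^sub>v v)"
  using assms by (intro eq_vecI) (auto simp: scalar_prod_def sum_distrib_left mult.assoc row_def)

lemma square_surj:
  fixes A :: "'k::field mat"
  assumes A: "A \<in> carrier_mat n n" and k: "\<forall>x\<in>carrier_vec n. A *\<^sub>v x = 0\<^sub>v n \<longrightarrow> x = 0\<^sub>v n"
    and y: "y \<in> carrier_vec n"
  shows "\<exists>x\<in>carrier_vec n. A *\<^sub>v x = y"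
proof -
  have "det A \<noteq> 0" using det_0_iff_vec_prod_zero_field[OF A] k by auto
  from det_non_zero_imp_unit[OF A this, of "()"]
  obtain B where B: "B \<in> carrier_mat n n" and AB: "A * B = 1\<^sub>m n"
    unfolding Units_def ring_mat_def by auto
  have "A *\<^sub>v (B *\<^sub>v y) = y" using AB A B y by (metis assoc_mult_mat_vec one_mult_mat_vec)
  then show ?thesis using B y by (intro bexI[of _ "B *\<^sub>v y"]) auto
qed

lemma reg_map:
  fixes Alg :: "('k::field) alg"
  assumes A: "fd_algebra Alg" and R: "is_mod Alg False R" and v: "v \<in> carrier_vec (fst R)"
    and bij: "bij_betw (\<lambda>a. snd R a *\<^sub>v v) (snd Alg) (carrier_vec (fst R))"
    and N: "is_mod Alg False N" and w: "w \<in> carrier_vec (fst N)"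
  shows "\<exists>\<alpha>. is_hom Alg R N \<alpha> \<and> (\<forall>a\<in>snd Alg. \<alpha> *\<^sub>v (snd R a *\<^sub>v v) = snd N a *\<^sub>v w)"
proof -
  define m where "m = fst R"
  define n where "n = fst N"
  have vm: "v \<in> carrier_vec m" using v unfolding m_def .
  have wn: "w \<in> carrier_vec n" using w unfolding n_def .
  have rR: "snd R a \<in> carrier_mat m m" if "a \<in> snd Alg" for a using is_modD(1)[OF R that] unfolding m_def .
  have rN: "snd N a \<in> carrier_mat n n" if "a \<in> snd Alg" for a using is_modD(1)[OF N that] unfolding n_def .
  define pinv where "pinv x = (SOME a. a \<in> snd Alg \<and> snd R a *\<^sub>v v = x)" for x
  have pinv: "pinv x \<in> snd Alg \<and> snd R (pinv x) *\<^sub>v v = x" if "x \<in> carrier_vec m" for x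
  proof -
    have "x \<in> (\<lambda>a. snd R a *\<^sub>v v) ` snd Alg" using bij_betw_imp_surj_on[OF bij] that unfolding m_def by simp
    then have "\<exists>a. a \<in> snd Alg \<and> snd R a *\<^sub>v v = x" by auto
    then show ?thesis unfolding pinv_def by (rule someI_ex)
  qed
  have uniq: "a = b" if "a \<in> snd Alg" "b \<in> snd Alg" "snd R a *\<^sub>v v = snd R b *\<^sub>v v" for a b
    using bij_betw_imp_inj_on[OF bij] that by (auto dest: inj_onD)
  have inv_a: "pinv (snd R a *\<^sub>v v) = a" if "a \<in> snd Alg" for a
  proof -
    have xc: "snd R a *\<^sub>v v \<in> carrier_vec m" using rR[OF that] vm by simp
    show ?thesis using uniq[OF pinv[OF xc, THEN conjunct1] that] pinv[OF xc] by simp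
  qed
  define T where "T x = snd N (pinv x) *\<^sub>v w" for x
  have Tc: "T x \<in> carrier_vec n" if "x \<in> carrier_vec m" for x
    unfolding T_def using rN[OF pinv[OF that, THEN conjunct1]] wn by simp
  have T_add: "T (x + y) = T x + T y" if x: "x \<in> carrier_vec m" and y: "y \<in> carrier_vec m" for x y
  proof -
    have ix: "pinv x \<in> snd Alg" and iy: "pinv y \<in> snd Alg" using pinv x y by auto
    have "snd R (pinv x + pinv y) *\<^sub>v v = x + y"
      using is_modD(3)[OF R ix iy] add_mult_distrib_mat_vec[OF rR[OF ix] rR[OF iy] vm] pinv[OF x] pinv[OF y] by simp
    then have "pinv (x + y) = pinv x + pinv y" using inv_a[OF fd_algebraD(3)[OF A ix iy]] by simp
    then show ?thesis unfolding T_def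
      using is_modD(3)[OF N ix iy] add_mult_distrib_mat_vec[OF rN[OF ix] rN[OF iy] wn] by simp
  qed
  have T_smult: "T (c \<cdot>\<^sub>v x) = c \<cdot>\<^sub>v T x" if x: "x \<in> carrier_vec m" for x c
  proof -
    have ix: "pinv x \<in> snd Alg" using pinv x by auto
    have "snd R (c \<cdot>\<^sub>m pinv x) *\<^sub>v v = c \<cdot>\<^sub>v x"
      using is_modD(4)[OF R ix] smult_mat_mult_vec[OF rR[OF ix] vm] pinv[OF x] by simp
    then have "pinv (c \<cdot>\<^sub>v x) = c \<cdot>\<^sub>m pinv x" using inv_a[OF fd_algebraD(5)[OF A ix], of c] by simp
    then show ?thesis unfolding T_def
      using is_modD(4)[OF N ix] smult_mat_mult_vec[OF rN[OF ix] wn] by simp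
  qed
  define \<alpha> where "\<alpha> = mat n m (\<lambda>(i,j). T (unit_vec m j) $ i)"
  have \<alpha>c: "\<alpha> \<in> carrier_mat n m" unfolding \<alpha>_def by simp
  have \<alpha>T: "\<alpha> *\<^sub>v x = T x" if x: "x \<in> carrier_vec m" for x
  proof -
    define tr where "tr k = vec m (\<lambda>i. if i < k then x$i else 0)" for k
    have trc: "tr k \<in> carrier_vec m" for k unfolding tr_def by simp
    have "k \<le> m \<longrightarrow> \<alpha> *\<^sub>v tr k = T (tr k)" for k
    proof (induction k)
      case 0
      have t0: "tr 0 = 0 \<cdot>\<^sub>v tr 0" unfolding tr_def by (intro eq_vecI) auto
      have "T (tr 0) = 0 \<cdot>\<^sub>v T (tr 0)" by (subst t0, rule T_smult[OF trc])
      also have "\<dots> = 0\<^sub>v n" using Tc[OF trc, of 0] by simp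
      also have "\<dots> = \<alpha> *\<^sub>v tr 0" using \<alpha>c unfolding tr_def by (intro eq_vecI) (auto simp: scalar_prod_def)
      finally show ?case by simp
    next
      case (Suc k)
      show ?case
      proof
        assume k: "Suc k \<le> m"
        have ts: "tr (Suc k) = tr k + x$k \<cdot>\<^sub>v unit_vec m k"
          unfolding tr_def using k by (intro eq_vecI) (auto simp: less_Suc_eq)
        have "\<alpha> *\<^sub>v unit_vec m k = T (unit_vec m k)"
          using mat_col_unit[OF \<alpha>c, of k] k Tc[OF unit_vec_carrier[of m k]] unfolding \<alpha>_def
          by (intro eq_vecI) auto
        then have "\<alpha> *\<^sub>v tr (Suc k) = T (tr k) + x$k \<cdot>\<^sub>v T (unit_vec m k)"
          unfolding ts using Suc.IH k \<alpha>c trc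
          by (simp add: mult_add_distrib_mat_vec[OF \<alpha>c trc] mult_mat_vec[OF \<alpha>c])
        also have "\<dots> = T (tr (Suc k))"
          unfolding ts using T_add[OF trc, of "x$k \<cdot>\<^sub>v unit_vec m k"] T_smult[OF unit_vec_carrier[of m k]] by simp
        finally show "\<alpha> *\<^sub>v tr (Suc k) = T (tr (Suc k))" .
      qed
    qed
    moreover have "tr m = x" unfolding tr_def using x by (intro eq_vecI) auto
    ultimately show ?thesis by auto
  qed
  have main: "\<alpha> *\<^sub>v (snd R a *\<^sub>v v) = snd N a *\<^sub>v w" if a: "a \<in> snd Alg" for a
    using \<alpha>T[of "snd R a *\<^sub>v v"] rR[OF a] vm inv_a[OF a] unfolding T_def by simp
  have "is_hom Alg R N \<alpha>"
    unfolding is_hom_def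
  proof (intro conjI ballI)
    show "\<alpha> \<in> carrier_mat (fst N) (fst R)" using \<alpha>c unfolding n_def m_def .
    fix b assume b: "b \<in> snd Alg"
    show "\<alpha> * snd R b = snd N b * \<alpha>"
    proof (rule mat_eq_vecI[of _ n m])
      show "\<alpha> * snd R b \<in> carrier_mat n m" using \<alpha>c rR[OF b] by simp
      show "snd N b * \<alpha> \<in> carrier_mat n m" using \<alpha>c rN[OF b] by simp
      fix x :: "'k vec" assume x: "x \<in> carrier_vec m"
      define a where "a = pinv x"
      have a: "a \<in> snd Alg" and xa: "snd R a *\<^sub>v v = x" using pinv[OF x] unfolding a_def by auto
      have "(\<alpha> * snd R b) *\<^sub>v x = \<alpha> *\<^sub>v (snd R b *\<^sub>v (snd R a *\<^sub>v v))" using \<alpha>c rR[OF b] x xa by simp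
      also have "\<dots> = \<alpha> *\<^sub>v (snd R (a * b) *\<^sub>v v)" using is_modD(5)[OF R a b] rR[OF a] rR[OF b] vm by simp
      also have "\<dots> = snd N (a * b) *\<^sub>v w" using main[OF fd_algebraD(4)[OF A a b]] .
      also have "\<dots> = snd N b *\<^sub>v (snd N a *\<^sub>v w)" using is_modD(5)[OF N a b] rN[OF a] rN[OF b] wn by simp
      also have "\<dots> = (snd N b * \<alpha>) *\<^sub>v x" using main[OF a] xa \<alpha>c rN[OF b] x by simp
      finally show "(\<alpha> * snd R b) *\<^sub>v x = (snd N b * \<alpha>) *\<^sub>v x" .
    qed
  qed
  then show ?thesis using main by blast
qed



lemma mult_zero_vec_right: "(A::'k::field mat) \<in> carrier_mat n m \<Longrightarrow> A *\<^sub>v 0\<^sub>v m = 0\<^sub>v n"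
  by (intro eq_vecI) auto

lemma smult_zero_vec_right: "(c::'k::field) \<cdot>\<^sub>v 0\<^sub>v n = 0\<^sub>v n"
  by (intro eq_vecI) auto

lemma vec0_eq: "x \<in> carrier_vec 0 \<Longrightarrow> x = 0\<^sub>v 0"
  by (intro eq_vecI) auto

lemma mat_0col_eq: "A \<in> carrier_mat n 0 \<Longrightarrow> B \<in> carrier_mat n 0 \<Longrightarrow> A = B"
  by (intro eq_matI) auto

lemma mat_00_eq: "A \<in> carrier_mat 0 0 \<Longrightarrow> A = 1\<^sub>m 0"
  by (intro eq_matI) auto

lemma dim_zero: assumes "\<forall>y\<in>carrier_vec n. y = (0\<^sub>v n :: 'k::field vec)" shows "n = 0"
proof (rule ccontr)
  assume "n \<noteq> 0"
  then have "unit_vec n 0 \<noteq> (0\<^sub>v n :: 'k vec)" by simp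
  then show False using assms unit_vec_carrier[of n 0] by blast
qed

lemma ker_submod:
  fixes Alg :: "('k::field) alg"
  assumes M: "is_mod Alg l M" and N: "is_mod Alg l' N" and F: "is_hom Alg M N F"
  shows "submod Alg M (ker F (fst M))"
proof -
  have Fc: "F \<in> carrier_mat (fst N) (fst M)" using is_homD(1)[OF F] .
  show ?thesis unfolding submod_def
  proof (intro conjI ballI allI)
    show "ker F (fst M) \<subseteq> carrier_vec (fst M)" unfolding ker_def by auto
    show "0\<^sub>v (fst M) \<in> ker F (fst M)" unfolding ker_def using Fc mult_zero_vec_right[OF Fc] by simp
  next
    fix u w assume u: "u \<in> ker F (fst M)" and w: "w \<in> ker F (fst M)"
    then show "u + w \<in> ker F (fst M)" unfolding ker_def using Fc
      by (simp add: mult_add_distrib_mat_vec[OF Fc])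
  next
    fix c u assume u: "u \<in> ker F (fst M)"
    then show "c \<cdot>\<^sub>v u \<in> ker F (fst M)" unfolding ker_def using Fc
      by (simp add: mult_mat_vec[OF Fc] smult_zero_vec_right)
  next
    fix a u assume a: "a \<in> snd Alg" and u: "u \<in> ker F (fst M)"
    have rM: "snd M a \<in> carrier_mat (fst M) (fst M)" using is_modD(1)[OF M a] .
    have rN: "snd N a \<in> carrier_mat (fst N) (fst N)" using is_modD(1)[OF N a] .
    have uc: "u \<in> carrier_vec (fst M)" and u0: "F *\<^sub>v u = 0\<^sub>v (fst N)" using u Fc unfolding ker_def by auto
    have "F *\<^sub>v (snd M a *\<^sub>v u) = (F * snd M a) *\<^sub>v u" using Fc rM uc by simp
    also have "\<dots> = snd N a *\<^sub>v (F *\<^sub>v u)" using is_homD(2)[OF F a] Fc rN uc by simp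
    also have "\<dots> = 0\<^sub>v (fst N)" using u0 mult_zero_vec_right[OF rN] by simp
    finally show "snd M a *\<^sub>v u \<in> ker F (fst M)" unfolding ker_def using rM uc Fc by simp
  qed
qed

lemma img_submod:
  fixes Alg :: "('k::field) alg"
  assumes M: "is_mod Alg l M" and N: "is_mod Alg l' N" and F: "is_hom Alg M N F"
  shows "submod Alg N (img F (fst M))"
proof -
  have Fc: "F \<in> carrier_mat (fst N) (fst M)" using is_homD(1)[OF F] .
  show ?thesis unfolding submod_def
  proof (intro conjI ballI allI)
    show "img F (fst M) \<subseteq> carrier_vec (fst N)" unfolding img_def using Fc by auto
    have "F *\<^sub>v 0\<^sub>v (fst M) = 0\<^sub>v (fst N)" using mult_zero_vec_right[OF Fc] .
    then show "0\<^sub>v (fst N) \<in> img F (fst M)" unfolding img_def by (metis image_eqI zero_carrier_vec)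
  next
    fix u w assume u: "u \<in> img F (fst M)" and w: "w \<in> img F (fst M)"
    then obtain x y where x: "x \<in> carrier_vec (fst M)" "u = F *\<^sub>v x" and y: "y \<in> carrier_vec (fst M)" "w = F *\<^sub>v y"
      unfolding img_def by auto
    have "u + w = F *\<^sub>v (x + y)" using x y by (simp add: mult_add_distrib_mat_vec[OF Fc])
    then show "u + w \<in> img F (fst M)" unfolding img_def using x y by auto
  next
    fix c u assume u: "u \<in> img F (fst M)"
    then obtain x where x: "x \<in> carrier_vec (fst M)" "u = F *\<^sub>v x" unfolding img_def by auto
    have "c \<cdot>\<^sub>v u = F *\<^sub>v (c \<cdot>\<^sub>v x)" using x by (simp add: mult_mat_vec[OF Fc])
    then show "c \<cdot>\<^sub>v u \<in> img F (fst M)" unfolding img_def using x by auto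
  next
    fix a u assume a: "a \<in> snd Alg" and u: "u \<in> img F (fst M)"
    then show "snd N a *\<^sub>v u \<in> img F (fst M)" using hom_img_closed[OF F M N a] by simp
  qed
qed

lemma essentialD:
  assumes E: "essential Alg M U" and V: "submod Alg M V"
    and z: "\<And>x. x \<in> U \<Longrightarrow> x \<in> V \<Longrightarrow> x = 0\<^sub>v (fst M)"
  shows "V = {0\<^sub>v (fst M)}"
proof (rule ccontr)
  assume "V \<noteq> {0\<^sub>v (fst M)}"
  then have ne: "U \<inter> V \<noteq> {0\<^sub>v (fst M)}" using E V unfolding essential_def by blast
  have "0\<^sub>v (fst M) \<in> U" using E unfolding essential_def submod_def by blast
  moreover have "0\<^sub>v (fst M) \<in> V" using V unfolding submod_def by blast
  ultimately have "U \<inter> V = {0\<^sub>v (fst M)}" using z by blast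
  then show False using ne by blast
qed

lemma hom_id: "is_mod Alg l M \<Longrightarrow> is_hom Alg M M (1\<^sub>m (fst M))"
  unfolding is_hom_def using is_modD(1) by fastforce



lemma theta_inj:
  fixes Alg :: "('k::field) alg"
  assumes CI: "min_inj_coresolution Alg l X I d \<epsilon>"
    and th: "\<forall>k. is_hom Alg (I k) (I k) (\<theta> k)"
    and t0: "\<theta> 0 * \<epsilon> = \<epsilon>" and tS: "\<forall>k. \<theta> (Suc k) * d k = d k * \<theta> k"
  shows "\<forall>x\<in>carrier_vec (fst (I k)). \<theta> k *\<^sub>v x = 0\<^sub>v (fst (I k)) \<longrightarrow> x = 0\<^sub>v (fst (I k))"
proof -
  have C: "inj_coresolution Alg l X I d \<epsilon>" and ess: "\<And>i. essential Alg (I i) (ker (d i) (fst (I i)))"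
    using CI unfolding min_inj_coresolution_def by auto
  note I = inj_coresD[OF C]
  have \<theta>c: "\<theta> k \<in> carrier_mat (fst (I k)) (fst (I k))" for k using is_homD(1) th by blast
  have dc: "d k \<in> carrier_mat (fst (I (Suc k))) (fst (I k))" for k using is_homD(1)[OF I(5)] .
  have ec: "\<epsilon> \<in> carrier_mat (fst (I 0)) (fst X)" using is_homD(1)[OF I(4)] .
  have kerD: "x \<in> carrier_vec (fst (I k)) \<and> d k *\<^sub>v x = 0\<^sub>v (fst (I (Suc k)))" if "x \<in> ker (d k) (fst (I k))" for x k
    using that dc[of k] unfolding ker_def by auto
  have kerI: "x \<in> ker (d k) (fst (I k))" if "x \<in> carrier_vec (fst (I k))" "d k *\<^sub>v x = 0\<^sub>v (fst (I (Suc k)))" for x k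
    using that dc[of k] unfolding ker_def by auto
  have fix0: "\<theta> 0 *\<^sub>v x = x" if x: "x \<in> ker (d 0) (fst (I 0))" for x
  proof -
    obtain z where z: "z \<in> carrier_vec (fst X)" and xz: "x = \<epsilon> *\<^sub>v z" using x I(7) unfolding img_def by blast
    have "\<theta> 0 *\<^sub>v x = (\<theta> 0 * \<epsilon>) *\<^sub>v z" using xz \<theta>c[of 0] ec z by simp
    then show ?thesis using t0 xz by simp
  qed
  have Q: "(\<forall>x\<in>carrier_vec (fst (I k)). \<theta> k *\<^sub>v x = 0\<^sub>v (fst (I k)) \<longrightarrow> x = 0\<^sub>v (fst (I k))) \<and>
           (\<forall>w\<in>ker (d k) (fst (I k)). \<exists>y\<in>ker (d k) (fst (I k)). \<theta> k *\<^sub>v y = w)" for k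
  proof (induction k)
    case 0
    have V: "ker (\<theta> 0) (fst (I 0)) = {0\<^sub>v (fst (I 0))}"
    proof (rule essentialD[OF ess ker_submod[OF I(3) I(3) th[rule_format]]])
      fix x assume x1: "x \<in> ker (d 0) (fst (I 0))" and x2: "x \<in> ker (\<theta> 0) (fst (I 0))"
      then show "x = 0\<^sub>v (fst (I 0))" using fix0[OF x1] \<theta>c[of 0] unfolding ker_def by auto
    qed
    have "\<forall>x\<in>carrier_vec (fst (I 0)). \<theta> 0 *\<^sub>v x = 0\<^sub>v (fst (I 0)) \<longrightarrow> x = 0\<^sub>v (fst (I 0))"
      using V \<theta>c[of 0] unfolding ker_def by auto
    moreover have "\<forall>w\<in>ker (d 0) (fst (I 0)). \<exists>y\<in>ker (d 0) (fst (I 0)). \<theta> 0 *\<^sub>v y = w"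
      using fix0 by blast
    ultimately show ?case by blast
  next
    case (Suc k)
    have injk: "\<forall>x\<in>carrier_vec (fst (I k)). \<theta> k *\<^sub>v x = 0\<^sub>v (fst (I k)) \<longrightarrow> x = 0\<^sub>v (fst (I k))"
      using Suc.IH by blast
    have ontok: "\<forall>w\<in>ker (d k) (fst (I k)). \<exists>y\<in>ker (d k) (fst (I k)). \<theta> k *\<^sub>v y = w" using Suc.IH by blast
    have comm: "\<theta> (Suc k) *\<^sub>v (d k *\<^sub>v x) = d k *\<^sub>v (\<theta> k *\<^sub>v x)" if "x \<in> carrier_vec (fst (I k))" for x
    proof -
      have "\<theta> (Suc k) *\<^sub>v (d k *\<^sub>v x) = (\<theta> (Suc k) * d k) *\<^sub>v x" using \<theta>c[of "Suc k"] dc[of k] that by simp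
      also have "\<dots> = (d k * \<theta> k) *\<^sub>v x" using tS by simp
      also have "\<dots> = d k *\<^sub>v (\<theta> k *\<^sub>v x)" using \<theta>c[of k] dc[of k] that by simp
      finally show ?thesis .
    qed
    have onto: "\<forall>w\<in>ker (d (Suc k)) (fst (I (Suc k))). \<exists>y\<in>ker (d (Suc k)) (fst (I (Suc k))). \<theta> (Suc k) *\<^sub>v y = w"
    proof
      fix w assume "w \<in> ker (d (Suc k)) (fst (I (Suc k)))"
      then obtain x where x: "x \<in> carrier_vec (fst (I k))" and wx: "w = d k *\<^sub>v x"
        using I(8)[of k] unfolding img_def by blast
      obtain x' where x': "x' \<in> carrier_vec (fst (I k))" and xx: "\<theta> k *\<^sub>v x' = x"
        using square_surj[OF \<theta>c[of k] injk x] by blast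
      have "d k *\<^sub>v x' \<in> ker (d (Suc k)) (fst (I (Suc k)))" using I(8)[of k] x' unfolding img_def by blast
      moreover have "\<theta> (Suc k) *\<^sub>v (d k *\<^sub>v x') = w" using comm[OF x'] xx wx by simp
      ultimately show "\<exists>y\<in>ker (d (Suc k)) (fst (I (Suc k))). \<theta> (Suc k) *\<^sub>v y = w" by blast
    qed
    have V: "ker (\<theta> (Suc k)) (fst (I (Suc k))) = {0\<^sub>v (fst (I (Suc k)))}"
    proof (rule essentialD[OF ess ker_submod[OF I(3) I(3) th[rule_format]]])
      fix x assume x1: "x \<in> ker (d (Suc k)) (fst (I (Suc k)))" and x2: "x \<in> ker (\<theta> (Suc k)) (fst (I (Suc k)))"
      obtain y where y: "y \<in> carrier_vec (fst (I k))" and xy: "x = d k *\<^sub>v y"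
        using x1 I(8)[of k] unfolding img_def by blast
      have "\<theta> (Suc k) *\<^sub>v x = 0\<^sub>v (fst (I (Suc k)))" using x2 \<theta>c[of "Suc k"] unfolding ker_def by auto
      then have "d k *\<^sub>v (\<theta> k *\<^sub>v y) = 0\<^sub>v (fst (I (Suc k)))" using comm[OF y] xy by simp
      then have "\<theta> k *\<^sub>v y \<in> ker (d k) (fst (I k))" using kerI \<theta>c[of k] y by simp
      then obtain y' where y': "y' \<in> ker (d k) (fst (I k))" and yy: "\<theta> k *\<^sub>v y' = \<theta> k *\<^sub>v y"
        using ontok by blast
      have "y' = y" using kern_inj[OF \<theta>c[of k] injk _ y yy] kerD[OF y'] by blast
      then show "x = 0\<^sub>v (fst (I (Suc k)))" using kerD[OF y'] xy by simp
    qed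
    have "\<forall>x\<in>carrier_vec (fst (I (Suc k))). \<theta> (Suc k) *\<^sub>v x = 0\<^sub>v (fst (I (Suc k))) \<longrightarrow> x = 0\<^sub>v (fst (I (Suc k)))"
      using V \<theta>c[of "Suc k"] unfolding ker_def by auto
    then show ?case using onto by blast
  qed
  then show ?thesis by blast
qed

lemma descent:
  fixes Alg :: "('k::field) alg"
  assumes CI: "min_inj_coresolution Alg l X I d \<epsilon>"
    and P: "\<forall>k. projective_mod Alg l (I k)"
    and z: "fst (I (Suc (Suc k))) = 0"
  shows "fst (I (Suc k)) = 0"
proof -
  have C: "inj_coresolution Alg l X I d \<epsilon>" and ess: "\<And>i. essential Alg (I i) (ker (d i) (fst (I i)))"
    using CI unfolding min_inj_coresolution_def by auto
  note I = inj_coresD[OF C]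
  have dc: "d k \<in> carrier_mat (fst (I (Suc k))) (fst (I k))" for k using is_homD(1)[OF I(5)] .
  have "ker (d (Suc k)) (fst (I (Suc k))) = carrier_vec (fst (I (Suc k)))"
    unfolding ker_def using dc[of "Suc k"] z vec0_eq by auto
  then have surj: "img (d k) (fst (I k)) = carrier_vec (fst (I (Suc k)))" using I(8)[of k] by simp
  obtain s where s: "is_hom Alg (I (Suc k)) (I k) s" and ds: "d k * s = 1\<^sub>m (fst (I (Suc k)))"
    using P[rule_format, of "Suc k"] unfolding projective_mod_def
    using I(3)[of k] I(3)[of "Suc k"] I(5)[of k] surj hom_id[OF I(3)[of "Suc k"]] by blast
  have sc: "s \<in> carrier_mat (fst (I k)) (fst (I (Suc k)))" using is_homD(1)[OF s] .
  have ds': "d k *\<^sub>v (s *\<^sub>v y) = y" if "y \<in> carrier_vec (fst (I (Suc k)))" for y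
    using ds dc[of k] sc that by (metis assoc_mult_mat_vec one_mult_mat_vec)
  have V: "img s (fst (I (Suc k))) = {0\<^sub>v (fst (I k))}"
  proof (rule essentialD[OF ess img_submod[OF I(3) I(3) s]])
    fix x assume x1: "x \<in> ker (d k) (fst (I k))" and x2: "x \<in> img s (fst (I (Suc k)))"
    obtain y where y: "y \<in> carrier_vec (fst (I (Suc k)))" and xy: "x = s *\<^sub>v y" using x2 unfolding img_def by blast
    have "y = d k *\<^sub>v x" using ds'[OF y] xy by simp
    also have "\<dots> = 0\<^sub>v (fst (I (Suc k)))" using x1 dc[of k] unfolding ker_def by auto
    finally show "x = 0\<^sub>v (fst (I k))" using xy mult_zero_vec_right[OF sc] by simp
  qed
  have "\<forall>y\<in>carrier_vec (fst (I (Suc k))). y = (0\<^sub>v (fst (I (Suc k))) :: 'k vec)"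
  proof
    fix y :: "'k vec" assume y: "y \<in> carrier_vec (fst (I (Suc k)))"
    have "s *\<^sub>v y \<in> img s (fst (I (Suc k)))" unfolding img_def using y by blast
    then have "s *\<^sub>v y = 0\<^sub>v (fst (I k))" using V by blast
    then show "y = 0\<^sub>v (fst (I (Suc k)))" using ds'[OF y] mult_zero_vec_right[OF dc[of k]] by simp
  qed
  then show ?thesis by (rule dim_zero)
qed

definition zmod :: "('k::field) amod" where "zmod = (0, \<lambda>_. 1\<^sub>m 0)"

lemma zmod_mod: "is_mod Alg l (zmod :: ('k::field) amod)"
  unfolding is_mod_def Let_def zmod_def by (auto intro: mat_00_eq[symmetric])

lemma zmod_proj: "projective_mod Alg l (zmod :: ('k::field) amod)"
  unfolding projective_mod_def
proof (intro conjI allI impI)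
  show "is_mod Alg l zmod" by (rule zmod_mod)
  fix M N :: "'k amod" and g f
  assume a: "is_mod Alg l M \<and> is_mod Alg l N \<and> is_hom Alg M N g \<and> img g (fst M) = carrier_vec (fst N) \<and> is_hom Alg zmod N f"
  have fc: "f \<in> carrier_mat (fst N) 0" using a is_homD(1) unfolding zmod_def by fastforce
  have gc: "g \<in> carrier_mat (fst N) (fst M)" using a is_homD(1) by blast
  have "is_hom Alg zmod M (0\<^sub>m (fst M) 0)"
    unfolding is_hom_def zmod_def fst_conv snd_conv
  proof (intro conjI ballI)
    fix b assume b: "b \<in> snd Alg"
    have "snd M b \<in> carrier_mat (fst M) (fst M)" using is_modD(1)[of Alg l M b] a b by blast
    then show "0\<^sub>m (fst M) 0 * 1\<^sub>m 0 = snd M b * 0\<^sub>m (fst M) 0" by (intro mat_0col_eq) auto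
  qed simp
  moreover have "g * 0\<^sub>m (fst M) 0 = f" using fc gc by (intro mat_0col_eq) auto
  ultimately show "\<exists>h. is_hom Alg zmod M h \<and> g * h = f" by blast
qed

lemma proj_dim_proj:
  fixes Alg :: "('k::field) alg"
  assumes P: "projective_mod Alg l P"
  shows "proj_dim Alg l P \<le> enat i"
proof -
  have PM: "is_mod Alg l P" using P unfolding projective_mod_def by auto
  define PP where "PP k = (if k = 0 then P else zmod)" for k :: nat
  define dd where "dd k = (0\<^sub>m (fst (PP k)) 0 :: 'k mat)" for k
  define pp where "pp = (1\<^sub>m (fst P) :: 'k mat)"
  have PPm: "is_mod Alg l (PP k)" for k unfolding PP_def using PM zmod_mod[of Alg l] by auto
  have PPS: "PP (Suc k) = zmod" for k unfolding PP_def by simp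
  have z0: "fst (zmod :: 'k amod) = 0" unfolding zmod_def by simp
  have "proj_resolution Alg l P PP dd pp"
    unfolding proj_resolution_def
  proof (intro conjI allI)
    show "is_mod Alg l P" by (rule PM)
    fix i show "projective_mod Alg l (PP i)" unfolding PP_def using P zmod_proj[of Alg l] by auto
  next
    show "is_hom Alg (PP 0) P pp" unfolding PP_def pp_def using hom_id[OF PM] by simp
  next
    fix i
    show "is_hom Alg (PP (Suc i)) (PP i) (dd i)"
      unfolding is_hom_def PPS dd_def
    proof (intro conjI ballI)
      fix b assume b: "b \<in> snd Alg"
      have "snd (PP i) b \<in> carrier_mat (fst (PP i)) (fst (PP i))" using is_modD(1)[OF PPm[of i] b] .
      then show "0\<^sub>m (fst (PP i)) 0 * snd zmod b = snd (PP i) b * 0\<^sub>m (fst (PP i)) 0"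
        by (intro mat_0col_eq) (auto simp: zmod_def)
    qed (simp add: z0)
  next
    show "img pp (fst (PP 0)) = carrier_vec (fst P)" unfolding img_def pp_def PP_def by auto
  next
    have "fst (PP 1) = 0" "dd 0 = 0\<^sub>m (fst P) 0" unfolding PP_def dd_def using z0 by auto
    then have "img (dd 0) (fst (PP 1)) = {0\<^sub>v (fst P)}" using img_zero_cols[of "0\<^sub>m (fst P) 0" "fst P"] by simp
    moreover have "ker pp (fst (PP 0)) = {0\<^sub>v (fst P)}" unfolding ker_def pp_def PP_def by auto
    ultimately show "img (dd 0) (fst (PP 1)) = ker pp (fst (PP 0))" by simp
  next
    fix i
    have "img (dd (Suc i)) (fst (PP (Suc (Suc i)))) = {0\<^sub>v 0}"
      unfolding dd_def PPS z0 using img_zero_cols[of "0\<^sub>m 0 0" 0] by simp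
    moreover have "ker (dd i) (fst (PP (Suc i))) = {0\<^sub>v 0}"
      unfolding ker_def dd_def PPS z0 by (auto intro!: eq_vecI)
    ultimately show "img (dd (Suc i)) (fst (PP (Suc (Suc i)))) = ker (dd i) (fst (PP (Suc i)))" by simp
  qed
  moreover have "\<forall>i>0. fst (PP i) = 0" unfolding PP_def using z0 by auto
  ultimately have "0 \<in> {n. \<exists>Q dd pp. proj_resolution Alg l P Q dd pp \<and> (\<forall>i>n. fst (Q i) = 0)}" by blast
  then have "proj_dim Alg l P \<le> enat 0" unfolding proj_dim_def by (intro Inf_lower) auto
  then show ?thesis using order_trans zero_enat_def by fastforce
qed



theorem mainTheorem2:
  fixes Alg :: "('k::field) alg"
    and R :: "'k amod" and I :: "nat \<Rightarrow> 'k amod" and d :: "nat \<Rightarrow> 'k mat" and \<epsilon> :: "'k mat"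
  assumes "fd_algebra Alg"
    and "regular_mod Alg False R"
    and "min_inj_coresolution Alg False R I d \<epsilon>"
    and "auslander_condition Alg I \<longrightarrow> iwanaga_gorenstein Alg"
    and "dominant_dim Alg I = \<infinity>"
  shows "selfinjective Alg"
proof -
  note A = assms(1) and Rreg = assms(2) and CI = assms(3)
  have C: "inj_coresolution Alg False R I d \<epsilon>" and ess: "\<And>i. essential Alg (I i) (ker (d i) (fst (I i)))"
    using CI unfolding min_inj_coresolution_def by auto
  note I = inj_coresD[OF C]
  have proj: "\<forall>k. projective_mod Alg False (I k)"
  proof (rule ccontr)
    assume "\<not> (\<forall>k. projective_mod Alg False (I k))"
    then obtain k where "\<not> projective_mod Alg False (I k)" by blast
    then have "dominant_dim Alg I \<le> enat k" unfolding dominant_dim_def by (intro Inf_lower) auto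
    then show False using assms(5) by simp
  qed
  have "auslander_condition Alg I"
    unfolding auslander_condition_def n_gorenstein_def using proj proj_dim_proj by blast
  then have "iwanaga_gorenstein Alg" using assms(4) by blast
  then obtain R' where R'reg: "regular_mod Alg False R'" and fin: "inj_dim Alg False R' < \<infinity>"
    unfolding iwanaga_gorenstein_def by blast
  have "{n. \<exists>I d \<epsilon>. inj_coresolution Alg False R' I d \<epsilon> \<and> (\<forall>i>n. fst (I i) = 0)} \<noteq> {}"
  proof
    assume e: "{n. \<exists>I d \<epsilon>. inj_coresolution Alg False R' I d \<epsilon> \<and> (\<forall>i>n. fst (I i) = 0)} = {}"
    have "inj_dim Alg False R' = Inf (enat ` {})" unfolding inj_dim_def e ..
    then have "inj_dim Alg False R' = \<infinity>" by (simp add: top_enat_def)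
    then show False using fin by simp
  qed
  then obtain n J e \<epsilon>' where CJ: "inj_coresolution Alg False R' J e \<epsilon>'" and Jz: "\<forall>i>n. fst (J i) = 0"
    by blast
  note J = inj_coresD[OF CJ]
  obtain v where v: "v \<in> carrier_vec (fst R)" and vb: "bij_betw (\<lambda>a. snd R a *\<^sub>v v) (snd Alg) (carrier_vec (fst R))"
    using Rreg unfolding regular_mod_def by blast
  obtain v' where v': "v' \<in> carrier_vec (fst R')" and vb': "bij_betw (\<lambda>a. snd R' a *\<^sub>v v') (snd Alg) (carrier_vec (fst R'))"
    using R'reg unfolding regular_mod_def by blast
  obtain \<alpha> where \<alpha>: "is_hom Alg R R' \<alpha>" and \<alpha>v: "\<forall>a\<in>snd Alg. \<alpha> *\<^sub>v (snd R a *\<^sub>v v) = snd R' a *\<^sub>v v'"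
    using reg_map[OF A I(1) v vb J(1) v'] by blast
  obtain \<beta> where \<beta>: "is_hom Alg R' R \<beta>" and \<beta>v: "\<forall>a\<in>snd Alg. \<beta> *\<^sub>v (snd R' a *\<^sub>v v') = snd R a *\<^sub>v v"
    using reg_map[OF A J(1) v' vb' I(1) v] by blast
  have \<alpha>c: "\<alpha> \<in> carrier_mat (fst R') (fst R)" using is_homD(1)[OF \<alpha>] .
  have \<beta>c: "\<beta> \<in> carrier_mat (fst R) (fst R')" using is_homD(1)[OF \<beta>] .
  have \<beta>\<alpha>: "\<beta> * \<alpha> = 1\<^sub>m (fst R)"
  proof (rule mat_eq_vecI[of _ "fst R" "fst R"])
    show "\<beta> * \<alpha> \<in> carrier_mat (fst R) (fst R)" using \<alpha>c \<beta>c by simp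
    show "1\<^sub>m (fst R) \<in> carrier_mat (fst R) (fst R)" by simp
    fix x :: "'k vec" assume x: "x \<in> carrier_vec (fst R)"
    then obtain a where a: "a \<in> snd Alg" and xa: "x = snd R a *\<^sub>v v"
      using bij_betw_imp_surj_on[OF vb] by force
    have "(\<beta> * \<alpha>) *\<^sub>v x = \<beta> *\<^sub>v (\<alpha> *\<^sub>v x)" using \<alpha>c \<beta>c x by simp
    also have "\<dots> = x" using \<alpha>v \<beta>v a xa by simp
    finally show "(\<beta> * \<alpha>) *\<^sub>v x = 1\<^sub>m (fst R) *\<^sub>v x" using x by simp
  qed
  obtain \<phi> where \<phi>h: "\<forall>k. is_hom Alg (I k) (J k) (\<phi> k)" and \<phi>0: "\<phi> 0 * \<epsilon> = \<epsilon>' * \<alpha>"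
    and \<phi>S: "\<forall>k. \<phi> (Suc k) * d k = e k * \<phi> k"
    using comparison[OF A C CJ \<alpha>] by blast
  obtain \<psi> where \<psi>h: "\<forall>k. is_hom Alg (J k) (I k) (\<psi> k)" and \<psi>0: "\<psi> 0 * \<epsilon>' = \<epsilon> * \<beta>"
    and \<psi>S: "\<forall>k. \<psi> (Suc k) * e k = d k * \<psi> k"
    using comparison[OF A CJ C \<beta>] by blast
  have \<phi>c: "\<phi> k \<in> carrier_mat (fst (J k)) (fst (I k))" for k using is_homD(1) \<phi>h by blast
  have \<psi>c: "\<psi> k \<in> carrier_mat (fst (I k)) (fst (J k))" for k using is_homD(1) \<psi>h by blast
  have dc: "d k \<in> carrier_mat (fst (I (Suc k))) (fst (I k))" for k using is_homD(1)[OF I(5)] .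
  have ec: "e k \<in> carrier_mat (fst (J (Suc k))) (fst (J k))" for k using is_homD(1)[OF J(5)] .
  have \<epsilon>c: "\<epsilon> \<in> carrier_mat (fst (I 0)) (fst R)" using is_homD(1)[OF I(4)] .
  have \<epsilon>'c: "\<epsilon>' \<in> carrier_mat (fst (J 0)) (fst R')" using is_homD(1)[OF J(4)] .
  define \<theta> where "\<theta> k = \<psi> k * \<phi> k" for k
  have th: "\<forall>k. is_hom Alg (I k) (I k) (\<theta> k)"
    unfolding \<theta>_def using hom_comp[OF I(3) J(3) I(3)] \<phi>h \<psi>h by blast
  have t0: "\<theta> 0 * \<epsilon> = \<epsilon>"
  proof -
    have "\<theta> 0 * \<epsilon> = \<psi> 0 * (\<phi> 0 * \<epsilon>)" unfolding \<theta>_def using \<psi>c[of 0] \<phi>c[of 0] \<epsilon>c by simp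
    also have "\<dots> = \<psi> 0 * (\<epsilon>' * \<alpha>)" using \<phi>0 by simp
    also have "\<dots> = (\<psi> 0 * \<epsilon>') * \<alpha>" using \<psi>c[of 0] \<epsilon>'c \<alpha>c by simp
    also have "\<dots> = (\<epsilon> * \<beta>) * \<alpha>" using \<psi>0 by simp
    also have "\<dots> = \<epsilon> * (\<beta> * \<alpha>)" using \<epsilon>c \<beta>c \<alpha>c by simp
    also have "\<dots> = \<epsilon>" using \<beta>\<alpha> \<epsilon>c by simp
    finally show ?thesis .
  qed
  have tS: "\<forall>k. \<theta> (Suc k) * d k = d k * \<theta> k"
  proof
    fix k
    have "\<theta> (Suc k) * d k = \<psi> (Suc k) * (\<phi> (Suc k) * d k)"
      unfolding \<theta>_def using \<psi>c[of "Suc k"] \<phi>c[of "Suc k"] dc[of k] by simp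
    also have "\<dots> = \<psi> (Suc k) * (e k * \<phi> k)" using \<phi>S by simp
    also have "\<dots> = (\<psi> (Suc k) * e k) * \<phi> k" using \<psi>c[of "Suc k"] ec[of k] \<phi>c[of k] by simp
    also have "\<dots> = (d k * \<psi> k) * \<phi> k" using \<psi>S by simp
    also have "\<dots> = d k * \<theta> k" unfolding \<theta>_def using dc[of k] \<psi>c[of k] \<phi>c[of k] by simp
    finally show "\<theta> (Suc k) * d k = d k * \<theta> k" .
  qed
  have tinj: "\<forall>x\<in>carrier_vec (fst (I k)). \<theta> k *\<^sub>v x = 0\<^sub>v (fst (I k)) \<longrightarrow> x = 0\<^sub>v (fst (I k))" for k
    using theta_inj[OF CI th t0 tS] .
  have zSn: "fst (I (Suc n)) = 0"
  proof (rule dim_zero, intro ballI)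
    fix x :: "'k vec" assume x: "x \<in> carrier_vec (fst (I (Suc n)))"
    have J0: "fst (J (Suc n)) = 0" using Jz by simp
    have "\<phi> (Suc n) *\<^sub>v x \<in> carrier_vec 0" using \<phi>c[of "Suc n"] x J0 by simp
    then have "\<phi> (Suc n) *\<^sub>v x = 0\<^sub>v 0" by (rule vec0_eq)
    then have "\<theta> (Suc n) *\<^sub>v x = 0\<^sub>v (fst (I (Suc n)))"
      unfolding \<theta>_def using \<psi>c[of "Suc n"] \<phi>c[of "Suc n"] x J0 mult_zero_vec_right[of "\<psi> (Suc n)" "fst (I (Suc n))" 0]
      by simp
    then show "x = 0\<^sub>v (fst (I (Suc n)))" using tinj x by blast
  qed
  have "fst (I (Suc (n - j))) = 0" for j
  proof (induction j)
    case 0 then show ?case using zSn by simp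
  next
    case (Suc j)
    show ?case
    proof (cases "n - j = 0")
      case True then show ?thesis using Suc.IH by simp
    next
      case False
      then have "n - j = Suc (n - Suc j)" by simp
      then show ?thesis using descent[OF CI proj] Suc.IH by simp
    qed
  qed
  from this[of n] have I1: "fst (I 1) = 0" by simp
  have "ker (d 0) (fst (I 0)) = carrier_vec (fst (I 0))"
    unfolding ker_def using dc[of 0] I1 vec0_eq by auto
  then have surj: "img \<epsilon> (fst R) = carrier_vec (fst (I 0))" using I(7) by simp
  obtain s where s: "is_hom Alg (I 0) R s" and es: "\<epsilon> * s = 1\<^sub>m (fst (I 0))"
    using proj[rule_format, of 0] unfolding projective_mod_def
    using I(1) I(3)[of 0] I(4) surj hom_id[OF I(3)[of 0]] by blast
  have sc: "s \<in> carrier_mat (fst R) (fst (I 0))" using is_homD(1)[OF s] .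
  have \<epsilon>k: "\<forall>x\<in>carrier_vec (fst R). \<epsilon> *\<^sub>v x = 0\<^sub>v (fst (I 0)) \<longrightarrow> x = 0\<^sub>v (fst R)"
    using ker_zero_inj[OF \<epsilon>c I(6)] .
  have "injective_mod Alg False R"
    unfolding injective_mod_def
  proof (intro conjI allI impI)
    show "is_mod Alg False R" by (rule I(1))
    fix M N :: "'k amod" and f g
    assume a: "is_mod Alg False M \<and> is_mod Alg False N \<and> is_hom Alg M N f \<and>
        inj_on (\<lambda>v. f *\<^sub>v v) (carrier_vec (fst M)) \<and> is_hom Alg M R g"
    have gc: "g \<in> carrier_mat (fst R) (fst M)" using a is_homD(1) by blast
    have fc: "f \<in> carrier_mat (fst N) (fst M)" using a is_homD(1) by blast
    have "is_hom Alg M (I 0) (\<epsilon> * g)" using hom_comp[OF _ I(1) I(3)[of 0] _ I(4)] a by blast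
    then obtain h where h: "is_hom Alg N (I 0) h" and hf: "h * f = \<epsilon> * g"
      using I(2)[of 0] unfolding injective_mod_def using a by blast
    have hc: "h \<in> carrier_mat (fst (I 0)) (fst N)" using is_homD(1)[OF h] .
    have "is_hom Alg N R (s * h)" using hom_comp[OF _ I(3)[of 0] I(1) h s] a by blast
    moreover have "s * h * f = g"
    proof (rule mat_cancel[OF \<epsilon>c \<epsilon>k])
      show "s * h * f \<in> carrier_mat (fst R) (fst M)" using sc hc fc by simp
      show "g \<in> carrier_mat (fst R) (fst M)" using gc .
      have hfc: "h * f \<in> carrier_mat (fst (I 0)) (fst M)" using hc fc by simp
      have "\<epsilon> * (s * h * f) = (\<epsilon> * s) * (h * f)"
        using assoc_mult_mat[OF sc hc fc] assoc_mult_mat[OF \<epsilon>c sc hfc] by simp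
      also have "\<dots> = h * f" using es hc fc by simp
      finally show "\<epsilon> * (s * h * f) = \<epsilon> * g" using hf by simp
    qed
    ultimately show "\<exists>h. is_hom Alg N R h \<and> h * f = g" by blast
  qed
  then show ?thesis unfolding selfinjective_def using Rreg by blast
qed

end
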